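(* Suppose Assumptions 1, 2 and 3 hold and $f$ is twice continuously differentiable. Let $\delta>0$ and $\beta\in(0,1)$, and let $C=C(\beta)$ be the smallest positive integer $C$ with $\frac C2\beta^C\le\frac{1}{1-\beta^2}\frac{1}{C+1}$ and $\beta^{C+1}\le\frac12$. Run \textsc{Signum} from $x_0$: at step $k\ge0$ draw a mini-batch stochastic gradient $\tilde g_k$ of size $n_k=k+1$ at $x_k$, form $$\tilde m_k=\frac{1-\beta}{1-\beta^{k+1}}\sum_{t=0}^k\beta^t\tilde g_{k-t},$$ and set $\delta_k=\delta/\sqrt{k+1}$ and $$x_{k+1}=\begin{cases}x_k-\delta_k\,\mathrm{sign}(\tilde g_k), & k<C \ \text{(warmup)},\\ x_k-\delta_k\,\mathrm{sign}(\tilde m_k), & k\ge C.\end{cases}$$ (Equivalently, with $m_0=0$ and $m_{k+1}=\beta m_k+(1-\beta)\tilde g_k$, $\mathrm{sign}(\tilde m_k)=\mathrm{sign}(m_{k+1})$.) Let $N=\sum_{k=0}^{K-1}n_k$ be the number of oracle calls up to step $K$, and $f_C:=\mathbb{E}[f(x_C)]$. Then there exist constants $A>0$ and $K_0$, depending only on $\beta$, such that for all $K\ge K_0$, $$\left(\mathbb{E}\Big[\frac{1}{K-C}\sum_{k=C}^{K-1}\|g_k\|_1\Big]\right)^2\le\frac{A}{\sqrt N}\left[\frac{f_C-f_*}{\delta}+(1+\log N)\Big(\frac{\delta\|\vec L\|_1}{1-\beta}+\|\vec\sigma\|_1\sqrt{1-\beta}\Big)\right]^2,$$ where $g_k=\nabla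 f(x_k)$.
   Context: $f:\mathbb{R}^d\to\mathbb{R}$ with gradient $g(x)=\nabla f(x)$. Assumption 1: there is a constant $f_*$ with $f(x)\ge f_*$ for all $x$. Assumption 2: there is a vector $\vec L=(L_1,\dots,L_d)$ of non-negative constants such that for all $x,y$, $\big|f(y)-f(x)-g(x)^T(y-x)\big|\le \frac12\sum_{i=1}^d L_i(y_i-x_i)^2$. Assumption 3: upon query $x$, a stochastic gradient oracle returns a random vector $\tilde g(x)$, independent of all other oracle calls, with $\mathbb{E}[\tilde g(x)]=g(x)$ and $\mathbb{E}[(\tilde g(x)_i-g(x)_i)^2]\le\sigma_i^2$ for a vector $\vec\sigma$ of non-negative constants. A mini-batch stochastic gradient of size $n$ at $x$ is the average of $n$ independent oracle calls at $x$. $\mathrm{sign}$ acts componentwise, with $\mathrm{sign}(0)=0$. *)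

theory Defs
  imports "HOL-Analysis.Analysis" "HOL-Probability.Probability"
begin

text \<open>Points of R^d are represented as functions nat => real vanishing at all
coordinates i >= d; nat => real carries the product topology (Function_Topology),
which on this subspace is the Euclidean topology.  This explicit carrier lets the
dimension d be quantified inside the statement, so the constants can be required
to depend on beta only.\<close>

definition supp_vec :: "nat \<Rightarrow> (nat \<Rightarrow> real) set" where
  "supp_vec d = {x. \<forall>i\<ge>d. x i = 0}"

definition l1norm :: "nat \<Rightarrow> (nat \<Rightarrow> real) \<Rightarrow> real" where
  "l1norm d x = (\<Sum>i<d. \<bar>x i\<bar>)"

definition has_grad :: "nat \<Rightarrow> ((nat \<Rightarrow> real) \<Rightarrow> real) \<Rightarrow> (nat \<Rightarrow> real) \<Rightarrow> (nat \<Rightarrow> real) \<Rightarrow> bool" where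
  "has_grad d F G x \<longleftrightarrow>
     ((\<lambda>h. (F (\<lambda>i. x i + h i) - F x - (\<Sum>i<d. G i * h i)) / l1norm d h) \<longlongrightarrow> 0)
       (at (\<lambda>_. 0) within supp_vec d)"

definition C2_with_grad :: "nat \<Rightarrow> ((nat \<Rightarrow> real) \<Rightarrow> real) \<Rightarrow> ((nat \<Rightarrow> real) \<Rightarrow> (nat \<Rightarrow> real)) \<Rightarrow> bool" where
  "C2_with_grad d f g \<longleftrightarrow>
     (\<forall>x\<in>supp_vec d. has_grad d f (g x) x) \<and>
     (\<exists>H :: (nat \<Rightarrow> real) \<Rightarrow> nat \<Rightarrow> nat \<Rightarrow> real.
        (\<forall>x\<in>supp_vec d. \<forall>i<d. has_grad d (\<lambda>y. g y i) (H x i) x) \<and>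
        (\<forall>i<d. \<forall>j<d. continuous_on (supp_vec d) (\<lambda>x. H x i j)))"

definition signum_C :: "real \<Rightarrow> nat" where
  "signum_C \<beta> = (LEAST C::nat. 0 < C \<and>
      real C / 2 * \<beta> ^ C \<le> 1 / (1 - \<beta>\<^sup>2) * (1 / (real C + 1)) \<and>
      \<beta> ^ (C + 1) \<le> 1 / 2)"

text \<open>Stochastic oracle model: an oracle call at x with noise u returns G x u.
The sample point omega assigns an independent noise omega (k,j) to the j-th oracle
call of step k.\<close>
definition minibatch :: "nat \<Rightarrow> ((nat \<Rightarrow> real) \<Rightarrow> real \<Rightarrow> (nat \<Rightarrow> real)) \<Rightarrow> nat
    \<Rightarrow> (nat \<Rightarrow> real) \<Rightarrow> (nat \<times> nat \<Rightarrow> real) \<Rightarrow> (nat \<Rightarrow> real)" where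
  "minibatch d G k x \<omega> =
     (\<lambda>i. if i < d then (\<Sum>j<k+1. G x (\<omega> (k, j)) i) / real (k + 1) else 0)"

text \<open>Signum state (x_k, m_k), with m_0 = 0, m_{k+1} = beta m_k + (1-beta) g~_k;
sign(m~_k) = sign(m_{k+1}).  Warmup uses sign(g~_k) for k < C.\<close>
fun signum_state :: "nat \<Rightarrow> real \<Rightarrow> real \<Rightarrow> nat \<Rightarrow> ((nat \<Rightarrow> real) \<Rightarrow> real \<Rightarrow> (nat \<Rightarrow> real))
    \<Rightarrow> (nat \<Rightarrow> real) \<Rightarrow> nat \<Rightarrow> (nat \<times> nat \<Rightarrow> real) \<Rightarrow> (nat \<Rightarrow> real) \<times> (nat \<Rightarrow> real)" where
  "signum_state d \<beta> \<delta> C G x0 0 \<omega> = (x0, (\<lambda>_. 0))"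
| "signum_state d \<beta> \<delta> C G x0 (Suc k) \<omega> =
     (let xm = signum_state d \<beta> \<delta> C G x0 k \<omega>;
          x = fst xm; m = snd xm;
          gt = minibatch d G k x \<omega>;
          m' = (\<lambda>i. \<beta> * m i + (1 - \<beta>) * gt i);
          dk = \<delta> / sqrt (real (k + 1));
          dir = (if k < C then gt else m')
      in ((\<lambda>i. x i - dk * (if i < d then sgn (dir i) else 0)), m'))"

definition signum_x :: "nat \<Rightarrow> real \<Rightarrow> real \<Rightarrow> ((nat \<Rightarrow> real) \<Rightarrow> real \<Rightarrow> (nat \<Rightarrow> real))
    \<Rightarrow> (nat \<Rightarrow> real) \<Rightarrow> nat \<Rightarrow> (nat \<times> nat \<Rightarrow> real) \<Rightarrow> (nat \<Rightarrow> real)" where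
  "signum_x d \<beta> \<delta> G x0 k \<omega> = fst (signum_state d \<beta> \<delta> (signum_C \<beta>) G x0 k \<omega>)"

end

theory Submission
  imports Defs
begin

lemma sgn_ineq:
  fixes g m c :: real
  assumes "c > 0"
  shows "- (g * sgn m) \<le> - \<bar>g\<bar> + 2 * \<bar>g - c * m\<bar>"
proof -
  consider "m > 0" | "m = 0" | "m < 0" by linarith
  then show ?thesis
  proof cases
    case 1
    then have "c * m > 0" using assms by simp
    then show ?thesis using 1 by (auto simp: abs_if sgn_if)
  next
    case 2 then show ?thesis by (auto simp: abs_if)
  next
    case 3
    then have "c * m < 0" using assms by (simp add: mult_pos_neg)
    then show ?thesis using 3 by (auto simp: abs_if sgn_if)
  qed
qed

lemma sqrt_ineq:
  fixes k t :: nat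
  assumes "t \<le> k"
  shows "1 / (sqrt (real k + 1) * sqrt (real (k - t) + 1)) \<le> (real t + 1) / (real k + 1)"
proof -
  have a: "real k + 1 \<le> (real t + 1)^2 * (real (k - t) + 1)"
  proof -
    have e: "real (k - t) = real k - real t" using assms by simp
    have "(real t + 1) * (real k - real t + 1) \<ge> real k + 1"
      using assms by (simp add: algebra_simps) (metis mult_right_mono of_nat_0_le_iff of_nat_mono)
    moreover have "(real t + 1)^2 * (real k - real t + 1) \<ge> (real t + 1) * (real k - real t + 1)"
      using assms by (simp add: power2_eq_square mult_right_mono)
    ultimately show ?thesis unfolding e by linarith
  qed
  have pos: "sqrt (real k + 1) * sqrt (real (k - t) + 1) > 0" by simp
  have "(real k + 1) = sqrt (real k + 1) * sqrt (real k + 1)" by simp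
  have "(real k + 1) \<le> (real t + 1) * (sqrt (real k + 1) * sqrt (real (k - t) + 1))"
  proof -
    have "sqrt ((real k + 1)^2) \<le> sqrt ((real t + 1)^2 * ((real k + 1) * (real (k - t) + 1)))"
      using a by (intro real_sqrt_le_mono) (simp add: power2_eq_square mult_left_mono)
    then show ?thesis by (simp add: real_sqrt_mult)
  qed
  then show ?thesis using pos by (simp add: field_simps)
qed

lemma sq_sum_le: "(a + b)\<^sup>2 \<le> 2 * a\<^sup>2 + 2 * (b::real)\<^sup>2"
proof -
  have "(a+b)\<^sup>2 = a\<^sup>2 + b\<^sup>2 + 2*a*b" by (simp add: power2_sum)
  moreover have "(a-b)\<^sup>2 = a\<^sup>2 + b\<^sup>2 - 2*a*b" by (simp add: power2_diff)
  moreover have "0 \<le> (a-b)\<^sup>2" by simp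
  ultimately show ?thesis by linarith
qed

lemma grad_l1_lip:
  fixes f :: "(nat \<Rightarrow> real) \<Rightarrow> real" and g :: "(nat \<Rightarrow> real) \<Rightarrow> nat \<Rightarrow> real"
  assumes smooth: "\<forall>x\<in>supp_vec d. \<forall>y\<in>supp_vec d.
        \<bar>f y - f x - (\<Sum>i<d. g x i * (y i - x i))\<bar> \<le> 1 / 2 * (\<Sum>i<d. L i * (y i - x i)\<^sup>2)"
    and Lnn: "\<forall>i<d. 0 \<le> L i" and x: "x \<in> supp_vec d" and y: "y \<in> supp_vec d"
    and r: "\<forall>i<d. \<bar>y i - x i\<bar> \<le> r"
  shows "(\<Sum>i<d. \<bar>g y i - g x i\<bar>) \<le> 3 * (\<Sum>i<d. L i) * r"
proof (cases "r > 0")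
  case False
  have "\<forall>i<d. y i = x i"
  proof (intro allI impI)
    fix i assume "i < d"
    then have "\<bar>y i - x i\<bar> \<le> r" using r by auto
    then show "y i = x i" using False by (smt (verit))
  qed
  then have "y = x"
  proof (intro ext)
    fix i assume h: "\<forall>i<d. y i = x i"
    show "y i = x i" using h x y by (cases "i < d") (auto simp: supp_vec_def)
  qed
  moreover have "r = 0 \<or> d = 0"
  proof (cases "d = 0")
    case False
    then have "\<bar>y 0 - x 0\<bar> \<le> r" using r by auto
    then show ?thesis using \<open>\<not> r > 0\<close> by auto
  qed simp
  ultimately show ?thesis by auto
next
  case True
  define s where "s i = (if i < d then sgn (g y i - g x i) else 0)" for i
  define z where "z i = y i + r * s i" for i
  have z: "z \<in> supp_vec d" using y by (auto simp: supp_vec_def z_def s_def)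
  have A: "f z - f x - (\<Sum>i<d. g x i * (z i - x i)) \<le> 1/2 * (\<Sum>i<d. L i * (z i - x i)\<^sup>2)"
    using abs_le_D1[OF smooth[rule_format, OF x z]] .
  have B: "-(f z - f y - (\<Sum>i<d. g y i * (z i - y i))) \<le> 1/2 * (\<Sum>i<d. L i * (z i - y i)\<^sup>2)"
    using abs_le_D2[OF smooth[rule_format, OF y z]] .
  have C: "-(f y - f x - (\<Sum>i<d. g x i * (y i - x i))) \<le> 1/2 * (\<Sum>i<d. L i * (y i - x i)\<^sup>2)"
    using abs_le_D2[OF smooth[rule_format, OF x y]] .
  have lhs: "(\<Sum>i<d. g y i * (z i - y i)) - (\<Sum>i<d. g x i * (z i - x i)) + (\<Sum>i<d. g x i * (y i - x i))
      = r * (\<Sum>i<d. \<bar>g y i - g x i\<bar>)"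
  proof -
    have "(\<Sum>i<d. g y i * (z i - y i)) - (\<Sum>i<d. g x i * (z i - x i)) + (\<Sum>i<d. g x i * (y i - x i))
        = (\<Sum>i<d. g y i * (z i - y i) - g x i * (z i - x i) + g x i * (y i - x i))"
      by (simp add: sum_subtractf sum.distrib)
    also have "\<dots> = (\<Sum>i<d. r * \<bar>g y i - g x i\<bar>)"
      by (intro sum.cong refl) (simp add: z_def s_def algebra_simps abs_if sgn_if)
    finally show ?thesis by (simp add: sum_distrib_left)
  qed
  have Q1: "(\<Sum>i<d. L i * (z i - x i)\<^sup>2) \<le> (\<Sum>i<d. L i * (2 * r\<^sup>2 + 2 * r\<^sup>2))"
  proof (intro sum_mono)
    fix i assume i: "i \<in> {..<d}"
    have "(z i - x i)\<^sup>2 = ((y i - x i) + r * s i)\<^sup>2" by (simp add: z_def algebra_simps)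
    also have "\<dots> \<le> 2 * (y i - x i)\<^sup>2 + 2 * (r * s i)\<^sup>2"
      by (rule sq_sum_le)
    also have "(y i - x i)\<^sup>2 \<le> r\<^sup>2" proof -
      have "\<bar>y i - x i\<bar> \<le> r" using r i by auto
      then show ?thesis by (metis power2_abs power_mono abs_ge_zero)
    qed
    also have "(r * s i)\<^sup>2 \<le> r\<^sup>2" by (simp add: s_def power_mult_distrib sgn_if)
    finally show "L i * (z i - x i)\<^sup>2 \<le> L i * (2 * r\<^sup>2 + 2 * r\<^sup>2)"
      using Lnn i by (intro mult_left_mono) auto
  qed
  have Q2: "(\<Sum>i<d. L i * (z i - y i)\<^sup>2) \<le> (\<Sum>i<d. L i * r\<^sup>2)"
  proof (intro sum_mono)
    fix i assume i: "i \<in> {..<d}"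
    have "(z i - y i)\<^sup>2 \<le> r\<^sup>2" by (simp add: z_def s_def power_mult_distrib sgn_if)
    then show "L i * (z i - y i)\<^sup>2 \<le> L i * r\<^sup>2" using Lnn i by (intro mult_left_mono) auto
  qed
  have Q3: "(\<Sum>i<d. L i * (y i - x i)\<^sup>2) \<le> (\<Sum>i<d. L i * r\<^sup>2)"
  proof (intro sum_mono)
    fix i assume i: "i \<in> {..<d}"
    have "(y i - x i)\<^sup>2 \<le> r\<^sup>2" proof -
      have "\<bar>y i - x i\<bar> \<le> r" using r i by auto
      then show ?thesis by (metis power2_abs power_mono abs_ge_zero)
    qed
    then show "L i * (y i - x i)\<^sup>2 \<le> L i * r\<^sup>2" using Lnn i by (intro mult_left_mono) auto
  qed
  have "r * (\<Sum>i<d. \<bar>g y i - g x i\<bar>) \<le> 1/2 * ((\<Sum>i<d. L i * (2 * r\<^sup>2 + 2 * r\<^sup>2)) + (\<Sum>i<d. L i * r\<^sup>2) + (\<Sum>i<d. L i * r\<^sup>2))"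
  proof -
    have "(\<Sum>i<d. g y i * (z i - y i)) - (\<Sum>i<d. g x i * (z i - x i)) + (\<Sum>i<d. g x i * (y i - x i))
      \<le> 1/2 * (\<Sum>i<d. L i * (z i - x i)\<^sup>2) + 1/2 * (\<Sum>i<d. L i * (z i - y i)\<^sup>2) + 1/2 * (\<Sum>i<d. L i * (y i - x i)\<^sup>2)"
      using A B C by linarith
    then have "r * (\<Sum>i<d. \<bar>g y i - g x i\<bar>) \<le> 1/2 * (\<Sum>i<d. L i * (z i - x i)\<^sup>2) + 1/2 * (\<Sum>i<d. L i * (z i - y i)\<^sup>2) + 1/2 * (\<Sum>i<d. L i * (y i - x i)\<^sup>2)"
      unfolding lhs .
    also have "\<dots> \<le> 1/2 * (\<Sum>i<d. L i * (2 * r\<^sup>2 + 2 * r\<^sup>2)) + 1/2 * (\<Sum>i<d. L i * r\<^sup>2) + 1/2 * (\<Sum>i<d. L i * r\<^sup>2)"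
      using Q1 Q2 Q3 by (intro add_mono mult_left_mono) auto
    finally show ?thesis by (simp add: distrib_left)
  qed
  also have "\<dots> = r * (3 * (\<Sum>i<d. L i) * r)"
  proof -
    have e1: "(\<Sum>i<d. L i * (2 * r\<^sup>2 + 2 * r\<^sup>2)) = (\<Sum>i<d. L i) * (4 * r\<^sup>2)"
      by (simp add: sum_distrib_right)
    have e2: "(\<Sum>i<d. L i * r\<^sup>2) = (\<Sum>i<d. L i) * r\<^sup>2"
      by (simp add: sum_distrib_right)
    show ?thesis unfolding e1 e2 by (simp add: power2_eq_square algebra_simps)
  qed
  finally show ?thesis using True by simp
qed

lemma harm_le_ln:
  assumes "K \<ge> 1"
  shows "(\<Sum>k<K. 1 / (real k + 1)) \<le> 1 + ln (real K)"
  using assms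
proof (induction K rule: nat_induct_at_least)
  case base
  then show ?case by simp
next
  case (Suc n)
  have n: "real n \<ge> 1" using Suc by simp
  have "ln (real n / (real n + 1)) \<le> real n / (real n + 1) - 1"
    using n by (intro ln_le_minus_one) auto
  also have "\<dots> = - (1 / (real n + 1))" using n by (simp add: field_simps)
  finally have "1 / (real n + 1) \<le> ln (real n + 1) - ln (real n)"
    using n by (simp add: ln_div)
  moreover have "ln (real n + 1) = ln (1 + real n)" by (simp add: add.commute)
  ultimately show ?case using Suc by simp
qed

lemma poly_geom_bound:
  fixes \<beta> :: real
  assumes "0 < \<beta>" "\<beta> < 1"
  shows "\<exists>B. \<forall>k. (\<Sum>t\<le>k. \<beta>^t * (real t + 1)\<^sup>2) \<le> B"
proof -
  define \<gamma> where "\<gamma> = sqrt \<beta>"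
  define \<rho> where "\<rho> = sqrt \<gamma>"
  have g: "0 < \<gamma>" "\<gamma> < 1" using assms by (auto simp: \<gamma>_def)
  have r: "0 < \<rho>" "\<rho> < 1" using g by (auto simp: \<rho>_def)
  have "(\<lambda>n. of_nat n * \<rho> ^ n) \<longlonglongrightarrow> 0" using r by (intro powser_times_n_limit_0) simp
  then have "Bseq (\<lambda>n. of_nat n * \<rho> ^ n)" by (intro convergent_imp_Bseq convergentI)
  then obtain Bd where Bd: "0 < Bd" "\<And>n. norm (of_nat n * \<rho> ^ n) \<le> Bd" by (auto elim: BseqE)
  have t1: "(real n + 1) * \<rho>^n \<le> Bd + 1" for n
  proof -
    have "real n * \<rho>^n \<le> Bd" using Bd(2)[of n] r by simp
    moreover have "\<rho>^n \<le> 1" using r by (simp add: power_le_one)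
    ultimately show ?thesis by (simp add: algebra_simps)
  qed
  have t2: "\<beta>^n * (real n + 1)\<^sup>2 \<le> (Bd + 1)\<^sup>2 * \<gamma>^n" for n
  proof -
    have gg: "\<gamma>^2 = \<beta>" using assms by (simp add: \<gamma>_def)
    have rr: "\<rho>^2 = \<gamma>" using g by (simp add: \<rho>_def)
    have b1: "\<beta>^n = \<gamma>^n * \<gamma>^n" using gg by (metis power2_eq_square power_mult_distrib)
    have b2: "\<gamma>^n = (\<rho>^n)^2" using rr by (metis power_mult mult.commute)
    have b: "\<beta>^n = (\<rho>^n)\<^sup>2 * \<gamma>^n" using b1 b2 by simp
    have "\<beta>^n * (real n + 1)\<^sup>2 = ((real n + 1) * \<rho>^n)\<^sup>2 * \<gamma>^n" by (simp add: b power_mult_distrib)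
    also have "\<dots> \<le> (Bd + 1)\<^sup>2 * \<gamma>^n"
      using t1[of n] r g by (intro mult_right_mono power_mono) auto
    finally show ?thesis .
  qed
  show ?thesis
  proof (intro exI allI)
    fix k
    have "(\<Sum>t\<le>k. \<beta>^t * (real t + 1)\<^sup>2) \<le> (\<Sum>t\<le>k. (Bd + 1)\<^sup>2 * \<gamma>^t)"
      by (intro sum_mono t2)
    also have "\<dots> = (Bd + 1)\<^sup>2 * (\<Sum>t\<le>k. \<gamma>^t)" by (simp add: sum_distrib_left)
    also have "(\<Sum>t\<le>k. \<gamma>^t) \<le> (\<Sum>t. \<gamma>^t)"
      using g by (intro sum_le_suminf summable_geometric) auto
    finally show "(\<Sum>t\<le>k. \<beta>^t * (real t + 1)\<^sup>2) \<le> (Bd + 1)\<^sup>2 * (\<Sum>t. \<gamma>^t)"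
      by (simp add: mult_left_mono)
  qed
qed

locale sig =
  fixes d :: nat and f :: "(nat \<Rightarrow> real) \<Rightarrow> real" and g :: "(nat \<Rightarrow> real) \<Rightarrow> (nat \<Rightarrow> real)"
    and L :: "nat \<Rightarrow> real" and \<sigma> :: "nat \<Rightarrow> real" and fstar :: real and N :: "real measure"
    and G :: "(nat \<Rightarrow> real) \<Rightarrow> real \<Rightarrow> (nat \<Rightarrow> real)" and \<delta> :: real and x0 :: "nat \<Rightarrow> real"
    and \<beta> :: real and C :: nat
  assumes beta0: "0 < \<beta>" and beta1: "\<beta> < 1"
    and fstar: "\<forall>x\<in>supp_vec d. fstar \<le> f x"
    and Lnn: "\<forall>i<d. 0 \<le> L i"
    and smooth: "\<forall>x\<in>supp_vec d. \<forall>y\<in>supp_vec d.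
        \<bar>f y - f x - (\<Sum>i<d. g x i * (y i - x i))\<bar> \<le> 1 / 2 * (\<Sum>i<d. L i * (y i - x i)\<^sup>2)"
    and probN: "prob_space N"
    and Gmeas: "\<forall>i<d. (\<lambda>p. G (fst p) (snd p) i) \<in> borel_measurable (borel \<Otimes>\<^sub>M N)"
    and Gint: "\<forall>x\<in>supp_vec d. \<forall>i<d. integrable N (\<lambda>u. G x u i) \<and> (\<integral>u. G x u i \<partial>N) = g x i"
    and snn: "\<forall>i<d. 0 \<le> \<sigma> i"
    and Gvar: "\<forall>x\<in>supp_vec d. \<forall>i<d. integrable N (\<lambda>u. (G x u i - g x i)\<^sup>2) \<and>
        (\<integral>u. (G x u i - g x i)\<^sup>2 \<partial>N) \<le> (\<sigma> i)\<^sup>2"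
    and dpos: "0 < \<delta>" and x0: "x0 \<in> supp_vec d"
begin

definition "X k \<omega> = fst (signum_state d \<beta> \<delta> C G x0 k \<omega>)"
definition "Mo k \<omega> = snd (signum_state d \<beta> \<delta> C G x0 k \<omega>)"
definition "gt k \<omega> = minibatch d G k (X k \<omega>) \<omega>"
definition "dir k \<omega> i = (if k < C then gt k \<omega> i else \<beta> * Mo k \<omega> i + (1 - \<beta>) * gt k \<omega> i)"
definition "dk k = \<delta> / sqrt (real (k + 1))"
definition "\<xi> j \<omega> i = gt j \<omega> i - g (X j \<omega>) i"
definition "Lsum = (\<Sum>i<d. L i)"

lemma X_0: "X 0 \<omega> = x0" and Mo_0: "Mo 0 \<omega> = (\<lambda>_. 0)"
  by (simp_all add: X_def Mo_def)

lemma X_Suc: "X (Suc k) \<omega> = (\<lambda>i. X k \<omega> i - dk k * (if i < d then sgn (dir k \<omega> i) else 0))"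
  by (simp add: X_def Mo_def gt_def dir_def dk_def Let_def fun_eq_iff)

lemma Mo_Suc: "Mo (Suc k) \<omega> = (\<lambda>i. \<beta> * Mo k \<omega> i + (1 - \<beta>) * gt k \<omega> i)"
  by (simp add: X_def Mo_def gt_def Let_def)

lemma dk_nonneg: "0 \<le> dk k" using dpos by (simp add: dk_def)

lemma X_supp: "X k \<omega> \<in> supp_vec d"
  using x0 by (induction k) (auto simp: X_0 X_Suc supp_vec_def)

lemma Mo_closed: "Mo (Suc k) \<omega> i = (1 - \<beta>) * (\<Sum>t\<le>k. \<beta>^t * gt (k - t) \<omega> i)"
proof (induction k)
  case 0 then show ?case by (simp add: Mo_Suc Mo_0)
next
  case (Suc k)
  have "Mo (Suc (Suc k)) \<omega> i = \<beta> * ((1 - \<beta>) * (\<Sum>t\<le>k. \<beta>^t * gt (k - t) \<omega> i)) + (1 - \<beta>) * gt (Suc k) \<omega> i"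
    using Suc by (simp add: Mo_Suc)
  also have "\<dots> = (1 - \<beta>) * (gt (Suc k) \<omega> i + (\<Sum>t\<le>k. \<beta>^Suc t * gt (k - t) \<omega> i))"
    by (simp add: sum_distrib_left algebra_simps)
  also have "\<dots> = (1 - \<beta>) * (\<Sum>t\<le>Suc k. \<beta>^t * gt (Suc k - t) \<omega> i)"
    by (subst sum.atMost_Suc_shift) simp
  finally show ?case .
qed

lemma X_diff: "m \<le> k \<Longrightarrow> \<bar>X k \<omega> i - X m \<omega> i\<bar> \<le> (\<Sum>s\<in>{m..<k}. dk s)"
proof (induction k rule: dec_induct)
  case base then show ?case by simp
next
  case (step k)
  have "\<bar>X (Suc k) \<omega> i - X m \<omega> i\<bar> \<le> \<bar>X k \<omega> i - X m \<omega> i\<bar> + dk k"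
  proof -
    have "\<bar>dk k * (if i < d then sgn (dir k \<omega> i) else 0)\<bar> \<le> dk k"
      using dk_nonneg[of k] by (auto simp: abs_mult sgn_if)
    then show ?thesis by (simp add: X_Suc)
  qed
  then show ?case using step by (simp add: sum.atLeastLessThan_Suc)
qed

lemma bias_bound:
  assumes "C \<le> k" and i: "i < d"
  shows "- (g (X k \<omega>) i * sgn (dir k \<omega> i)) \<le> - \<bar>g (X k \<omega>) i\<bar>
     + 2 * (\<Sum>t\<le>k. \<beta>^t * (\<bar>g (X k \<omega>) i - g (X (k - t) \<omega>) i\<bar> + \<bar>\<xi> (k - t) \<omega> i\<bar>))"
proof -
  define W where "W = (\<Sum>t\<le>k. \<beta>^t)"
  have W1: "W \<ge> 1"
  proof -
    have "(\<Sum>t\<in>{0}. \<beta>^t) \<le> W" unfolding W_def using beta0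
      by (intro sum_mono2) auto
    then show ?thesis by simp
  qed
  define c where "c = 1 / ((1 - \<beta>) * W)"
  have c: "c > 0" using W1 beta1 by (simp add: c_def)
  have dirm: "dir k \<omega> i = Mo (Suc k) \<omega> i" using assms by (simp add: dir_def Mo_Suc)
  have cm: "c * dir k \<omega> i = (\<Sum>t\<le>k. \<beta>^t * gt (k - t) \<omega> i) / W"
    using beta1 W1 by (simp add: dirm Mo_closed c_def)
  have gx: "g (X k \<omega>) i = (\<Sum>t\<le>k. \<beta>^t * g (X k \<omega>) i) / W"
    using W1 by (simp add: W_def sum_distrib_right[symmetric])
  have "g (X k \<omega>) i - c * dir k \<omega> i = (\<Sum>t\<le>k. \<beta>^t * (g (X k \<omega>) i - gt (k - t) \<omega> i)) / W"
    by (subst gx, subst cm) (simp add: diff_divide_distrib sum_subtractf algebra_simps)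
  then have "\<bar>g (X k \<omega>) i - c * dir k \<omega> i\<bar> = \<bar>\<Sum>t\<le>k. \<beta>^t * (g (X k \<omega>) i - gt (k - t) \<omega> i)\<bar> / W"
    using W1 by simp
  also have "\<dots> \<le> \<bar>\<Sum>t\<le>k. \<beta>^t * (g (X k \<omega>) i - gt (k - t) \<omega> i)\<bar>"
    using W1 by (simp add: divide_le_eq) (simp add: mult_le_cancel_left1 abs_ge_zero order_trans[OF _ mult_left_mono])
  also have "\<dots> \<le> (\<Sum>t\<le>k. \<bar>\<beta>^t * (g (X k \<omega>) i - gt (k - t) \<omega> i)\<bar>)" by (rule sum_abs)
  also have "\<dots> \<le> (\<Sum>t\<le>k. \<beta>^t * (\<bar>g (X k \<omega>) i - g (X (k - t) \<omega>) i\<bar> + \<bar>\<xi> (k - t) \<omega> i\<bar>))"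
  proof (intro sum_mono)
    fix t
    have "\<bar>g (X k \<omega>) i - gt (k - t) \<omega> i\<bar> \<le> \<bar>g (X k \<omega>) i - g (X (k - t) \<omega>) i\<bar> + \<bar>\<xi> (k - t) \<omega> i\<bar>"
      by (simp add: \<xi>_def)
    then show "\<bar>\<beta>^t * (g (X k \<omega>) i - gt (k - t) \<omega> i)\<bar> \<le> \<beta>^t * (\<bar>g (X k \<omega>) i - g (X (k - t) \<omega>) i\<bar> + \<bar>\<xi> (k - t) \<omega> i\<bar>)"
      using beta0 by (simp add: abs_mult mult_left_mono)
  qed
  finally have h: "\<bar>g (X k \<omega>) i - c * dir k \<omega> i\<bar> \<le> \<dots>" .
  show ?thesis
    by (rule order_trans[OF sgn_ineq[OF c, of "g (X k \<omega>) i" "dir k \<omega> i"]])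
      (intro add_left_mono mult_left_mono h, simp)
qed

lemma step_bound:
  assumes "C \<le> k"
  shows "f (X (Suc k) \<omega>) \<le> f (X k \<omega>) - dk k * l1norm d (g (X k \<omega>))
     + 2 * dk k * (\<Sum>t\<le>k. \<beta>^t * (3 * Lsum * (\<Sum>s\<in>{k-t..<k}. dk s) + (\<Sum>i<d. \<bar>\<xi> (k-t) \<omega> i\<bar>)))
     + 1/2 * (dk k)\<^sup>2 * Lsum"
proof -
  define x where "x = X k \<omega>"
  define y where "y = X (Suc k) \<omega>"
  define a where "a t i = \<bar>g (X k \<omega>) i - g (X (k - t) \<omega>) i\<bar>" for t i
  define e where "e t i = \<bar>\<xi> (k - t) \<omega> i\<bar>" for t i
  have S1: "f y \<le> f x + (\<Sum>i<d. g x i * (y i - x i)) + 1/2 * (\<Sum>i<d. L i * (y i - x i)\<^sup>2)"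
    using abs_le_D1[OF smooth[rule_format, OF X_supp[of k \<omega>] X_supp[of "Suc k" \<omega>]]]
    unfolding x_def y_def by linarith
  have S2: "(\<Sum>i<d. g x i * (y i - x i)) = dk k * (\<Sum>i<d. - (g x i * sgn (dir k \<omega> i)))"
    by (simp add: sum_distrib_left x_def y_def X_Suc algebra_simps)
  have S3: "(\<Sum>i<d. - (g x i * sgn (dir k \<omega> i))) \<le> (\<Sum>i<d. - \<bar>g x i\<bar> + 2 * (\<Sum>t\<le>k. \<beta>^t * (a t i + e t i)))"
    unfolding x_def a_def e_def by (intro sum_mono bias_bound assms) simp
  have S4: "(\<Sum>i<d. - \<bar>g x i\<bar> + 2 * (\<Sum>t\<le>k. \<beta>^t * (a t i + e t i)))
      = - l1norm d (g x) + 2 * (\<Sum>t\<le>k. \<beta>^t * ((\<Sum>i<d. a t i) + (\<Sum>i<d. e t i)))"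
  proof -
    have e1: "(\<Sum>i<d. - \<bar>g x i\<bar> + 2 * (\<Sum>t\<le>k. \<beta>^t * (a t i + e t i)))
        = - l1norm d (g x) + 2 * (\<Sum>i<d. \<Sum>t\<le>k. \<beta>^t * (a t i + e t i))"
      by (simp add: l1norm_def sum.distrib sum_negf sum_distrib_left sum_subtractf)
    have e2: "(\<Sum>i<d. \<Sum>t\<le>k. \<beta>^t * (a t i + e t i)) = (\<Sum>t\<le>k. \<Sum>i<d. \<beta>^t * (a t i + e t i))"
      by (rule sum.swap)
    have e3: "(\<Sum>t\<le>k. \<Sum>i<d. \<beta>^t * (a t i + e t i)) = (\<Sum>t\<le>k. \<beta>^t * ((\<Sum>i<d. a t i) + (\<Sum>i<d. e t i)))"
      by (intro sum.cong refl) (simp add: sum_distrib_left sum.distrib distrib_left)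
    show ?thesis unfolding e1 e2 e3 ..
  qed
  have S5: "(\<Sum>t\<le>k. \<beta>^t * ((\<Sum>i<d. a t i) + (\<Sum>i<d. e t i)))
      \<le> (\<Sum>t\<le>k. \<beta>^t * (3 * Lsum * (\<Sum>s\<in>{k-t..<k}. dk s) + (\<Sum>i<d. \<bar>\<xi> (k-t) \<omega> i\<bar>)))"
    unfolding e_def
  proof (intro sum_mono mult_left_mono add_right_mono)
    fix t assume t: "t \<in> {..k}"
    show "(\<Sum>i<d. a t i) \<le> 3 * Lsum * (\<Sum>s\<in>{k-t..<k}. dk s)"
      unfolding a_def Lsum_def
      by (rule grad_l1_lip[OF smooth Lnn X_supp X_supp]) (use X_diff[of "k - t" k] in auto)
  qed (use beta0 in auto)
  have S6: "1/2 * (\<Sum>i<d. L i * (y i - x i)\<^sup>2) \<le> 1/2 * (dk k)\<^sup>2 * Lsum"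
  proof -
    have "(\<Sum>i<d. L i * (y i - x i)\<^sup>2) \<le> (\<Sum>i<d. L i * (dk k)\<^sup>2)"
    proof (intro sum_mono mult_left_mono)
      fix i assume "i \<in> {..<d}"
      then show "0 \<le> L i" using Lnn by auto
      show "(y i - x i)\<^sup>2 \<le> (dk k)\<^sup>2"
        by (simp add: x_def y_def X_Suc power_mult_distrib sgn_if)
    qed
    then show ?thesis by (simp add: Lsum_def sum_distrib_right[symmetric] mult_ac)
  qed
  have "f y \<le> f x + dk k * (- l1norm d (g x) + 2 * (\<Sum>t\<le>k. \<beta>^t * (3 * Lsum * (\<Sum>s\<in>{k-t..<k}. dk s) + (\<Sum>i<d. \<bar>\<xi> (k-t) \<omega> i\<bar>))))
     + 1/2 * (dk k)\<^sup>2 * Lsum"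
  proof -
    have "(\<Sum>i<d. g x i * (y i - x i)) \<le> dk k * (- l1norm d (g x) + 2 * (\<Sum>t\<le>k. \<beta>^t * (3 * Lsum * (\<Sum>s\<in>{k-t..<k}. dk s) + (\<Sum>i<d. \<bar>\<xi> (k-t) \<omega> i\<bar>))))"
      unfolding S2 using S3 S4 S5 dk_nonneg[of k] by (intro mult_left_mono) auto
    then show ?thesis using S1 S6 by linarith
  qed
  then show ?thesis unfolding x_def y_def by (simp add: algebra_simps)
qed

lemma dk_le: "m \<le> s \<Longrightarrow> dk s \<le> \<delta> / sqrt (real m + 1)"
  using dpos by (simp add: dk_def divide_left_mono)

lemma dk_sq: "(dk k)\<^sup>2 = \<delta>\<^sup>2 / (real k + 1)"
  by (simp add: dk_def power_divide add.commute)

lemma key2: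
  assumes "t \<le> k"
  shows "dk k / sqrt (real (k - t) + 1) \<le> \<delta> * (real t + 1) / (real k + 1)"
proof -
  have "dk k / sqrt (real (k - t) + 1) = \<delta> * (1 / (sqrt (real k + 1) * sqrt (real (k - t) + 1)))"
    by (simp add: dk_def add.commute)
  also have "\<dots> \<le> \<delta> * ((real t + 1) / (real k + 1))"
    using sqrt_ineq[OF assms] dpos by (intro mult_left_mono) auto
  finally show ?thesis by simp
qed

lemma key1:
  assumes "t \<le> k"
  shows "dk k * (\<Sum>s\<in>{k-t..<k}. dk s) \<le> \<delta>\<^sup>2 * (real t + 1)\<^sup>2 / (real k + 1)"
proof -
  have "(\<Sum>s\<in>{k-t..<k}. dk s) \<le> (\<Sum>s\<in>{k-t..<k}. \<delta> / sqrt (real (k - t) + 1))"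
    by (intro sum_mono dk_le) auto
  also have "\<dots> = real t * (\<delta> / sqrt (real (k - t) + 1))" using assms by simp
  finally have "dk k * (\<Sum>s\<in>{k-t..<k}. dk s) \<le> dk k * (real t * (\<delta> / sqrt (real (k - t) + 1)))"
    using dk_nonneg by (intro mult_left_mono) auto
  also have "\<dots> = real t * \<delta> * (dk k / sqrt (real (k - t) + 1))" by simp
  also have "\<dots> \<le> real t * \<delta> * (\<delta> * (real t + 1) / (real k + 1))"
    using key2[OF assms] dpos by (intro mult_left_mono) auto
  also have "\<dots> \<le> (real t + 1) * \<delta> * (\<delta> * (real t + 1) / (real k + 1))"
    using dpos by (intro mult_right_mono) auto
  also have "\<dots> = \<delta>\<^sup>2 * (real t + 1)\<^sup>2 / (real k + 1)"
    by (simp add: power2_eq_square)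
  finally show ?thesis .
qed

lemma key2':
  assumes "t \<le> k"
  shows "dk k / sqrt (real (k - t) + 1) \<le> \<delta> * (real t + 1)\<^sup>2 / (real k + 1)"
proof -
  have "\<delta> * (real t + 1) / (real k + 1) \<le> \<delta> * (real t + 1)\<^sup>2 / (real k + 1)"
    using dpos by (intro divide_right_mono mult_left_mono) (auto simp: power2_eq_square)
  then show ?thesis using key2[OF assms] by linarith
qed

lemma det_bound:
  assumes B: "\<forall>k. (\<Sum>t\<le>k. \<beta>^t * (real t + 1)\<^sup>2) \<le> B"
  shows "2 * dk k * (\<Sum>t\<le>k. \<beta>^t * (3 * Lsum * (\<Sum>s\<in>{k-t..<k}. dk s))) + 1/2 * (dk k)\<^sup>2 * Lsum
     \<le> \<delta>\<^sup>2 * Lsum * (6 * B + 1/2) / (real k + 1)"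
proof -
  have L0: "Lsum \<ge> 0" using Lnn unfolding Lsum_def by (intro sum_nonneg) auto
  have "2 * dk k * (\<Sum>t\<le>k. \<beta>^t * (3 * Lsum * (\<Sum>s\<in>{k-t..<k}. dk s)))
      = 6 * Lsum * (\<Sum>t\<le>k. \<beta>^t * (dk k * (\<Sum>s\<in>{k-t..<k}. dk s)))"
    by (simp add: sum_distrib_left algebra_simps)
  also have "\<dots> \<le> 6 * Lsum * (\<Sum>t\<le>k. \<beta>^t * (\<delta>\<^sup>2 * (real t + 1)\<^sup>2 / (real k + 1)))"
    using L0 beta0 key1 by (intro mult_left_mono sum_mono) auto
  also have "\<dots> = 6 * Lsum * (\<delta>\<^sup>2 / (real k + 1)) * (\<Sum>t\<le>k. \<beta>^t * (real t + 1)\<^sup>2)"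
    by (simp add: sum_distrib_left sum_divide_distrib algebra_simps)
  also have "\<dots> \<le> 6 * Lsum * (\<delta>\<^sup>2 / (real k + 1)) * B"
    using B L0 by (intro mult_left_mono) auto
  finally have "2 * dk k * (\<Sum>t\<le>k. \<beta>^t * (3 * Lsum * (\<Sum>s\<in>{k-t..<k}. dk s))) + 1/2 * (dk k)\<^sup>2 * Lsum
     \<le> 6 * Lsum * (\<delta>\<^sup>2 / (real k + 1)) * B + 1/2 * (\<delta>\<^sup>2 / (real k + 1)) * Lsum"
    by (simp add: dk_sq)
  also have "\<dots> = (\<delta>\<^sup>2 / (real k + 1)) * (Lsum * (6 * B + 1/2))"
    by (simp only: algebra_simps)
  also have "\<dots> = \<delta>\<^sup>2 * Lsum * (6 * B + 1/2) / (real k + 1)"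
    by simp
  finally show ?thesis .
qed

lemma noise_det_bound:
  assumes B: "\<forall>k. (\<Sum>t\<le>k. \<beta>^t * (real t + 1)\<^sup>2) \<le> B" and S0: "S \<ge> 0"
  shows "2 * dk k * (\<Sum>t\<le>k. \<beta>^t * (S / sqrt (real (k - t) + 1)))
     \<le> 2 * \<delta> * S * B / (real k + 1)"
proof -
  have "2 * dk k * (\<Sum>t\<le>k. \<beta>^t * (S / sqrt (real (k - t) + 1)))
      = 2 * S * (\<Sum>t\<le>k. \<beta>^t * (dk k / sqrt (real (k - t) + 1)))"
    by (simp add: sum_distrib_left algebra_simps)
  also have "\<dots> \<le> 2 * S * (\<Sum>t\<le>k. \<beta>^t * (\<delta> * (real t + 1)\<^sup>2 / (real k + 1)))"
    using S0 beta0 key2' by (intro mult_left_mono sum_mono) auto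
  also have "(\<Sum>t\<le>k. \<beta>^t * (\<delta> * (real t + 1)\<^sup>2 / (real k + 1))) = (\<delta> / (real k + 1)) * (\<Sum>t\<le>k. \<beta>^t * (real t + 1)\<^sup>2)"
    by (simp add: sum_distrib_left sum_divide_distrib algebra_simps)
  also have "2 * S * ((\<delta> / (real k + 1)) * (\<Sum>t\<le>k. \<beta>^t * (real t + 1)\<^sup>2)) \<le> 2 * S * ((\<delta> / (real k + 1)) * B)"
    using B S0 dpos by (intro mult_left_mono) auto
  also have "\<dots> = 2 * \<delta> * S * B / (real k + 1)" by simp
  finally show ?thesis .
qed

definition "Tset = (\<lambda>s i. if i < d then s i else 0) ` (PiE {..<d} (\<lambda>_. {-1, 0, 1::real}))"

primrec Sset :: "nat \<Rightarrow> (nat \<Rightarrow> real) set" where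
  "Sset 0 = {x0}"
| "Sset (Suc k) = (\<lambda>(x, s). (\<lambda>i. x i - dk k * s i)) ` (Sset k \<times> Tset)"

lemma finite_Tset: "finite Tset"
  unfolding Tset_def by (intro finite_imageI finite_PiE) auto

lemma finite_Sset: "finite (Sset k)"
  by (induction k) (auto intro!: finite_imageI finite_cartesian_product finite_Tset)

lemma sv_in_T: "(\<lambda>i. if i < d then sgn (a i) else 0) \<in> Tset"
  unfolding Tset_def
proof (rule image_eqI[where x = "restrict (\<lambda>i. sgn (a i)) {..<d}"])
  show "(\<lambda>i. if i < d then sgn (a i) else 0) = (\<lambda>i. if i < d then restrict (\<lambda>i. sgn (a i)) {..<d} i else 0)"
    by auto
  show "restrict (\<lambda>i. sgn (a i)) {..<d} \<in> PiE {..<d} (\<lambda>_. {-1, 0, 1})"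
    by (auto simp: sgn_if)
qed


lemma Tset_zero: "s \<in> Tset \<Longrightarrow> i \<ge> d \<Longrightarrow> s i = 0"
  unfolding Tset_def by (erule imageE) simp


lemma X_Suc': "X (Suc k) \<omega> = (\<lambda>i. X k \<omega> i - dk k * (\<lambda>i. if i < d then sgn (dir k \<omega> i) else 0) i)"
  by (simp add: X_Suc)

lemma X_in_S: "X k \<omega> \<in> Sset k"
proof (induction k)
  case 0 then show ?case by (simp add: X_0)
next
  case (Suc k)
  have "(X k \<omega>, \<lambda>i. if i < d then sgn (dir k \<omega> i) else 0) \<in> Sset k \<times> Tset"
    using Suc sv_in_T by blast
  then show ?case unfolding Sset.simps X_Suc'
    by (rule rev_image_eqI) simp
qed

lemma Sset_supp: "Sset k \<subseteq> supp_vec d"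
proof (induction k)
  case 0 then show ?case using x0 by simp
next
  case (Suc k)
  show ?case
  proof
    fix y assume "y \<in> Sset (Suc k)"
    then obtain x s where xs: "x \<in> Sset k" "s \<in> Tset" and y: "y = (\<lambda>i. x i - dk k * s i)" by auto
    have "x \<in> supp_vec d" using xs Suc by blast
    then show "y \<in> supp_vec d" using Tset_zero[OF xs(2)] by (simp add: y supp_vec_def)
  qed
qed

lemma G_meas: "i < d \<Longrightarrow> (\<lambda>u. G v u i) \<in> borel_measurable N"
  using measurable_compose[OF measurable_Pair1'[of v borel N] Gmeas[rule_format]] by simp

lemma minibatch_meas:
  assumes "\<And>p. fst p = k \<Longrightarrow> (\<lambda>\<omega>. \<omega> p) \<in> measurable MM N"
  shows "(\<lambda>\<omega>. minibatch d G k v \<omega> i) \<in> borel_measurable MM"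
proof (cases "i < d")
  case True
  have "\<And>j. (\<lambda>\<omega>. G v (\<omega> (k, j)) i) \<in> borel_measurable MM"
    using measurable_compose[OF assms G_meas[OF True]] by simp
  then show ?thesis using True by (simp add: minibatch_def)
next
  case False then show ?thesis by (simp add: minibatch_def)
qed

lemma meas_X:
  assumes "\<And>p. fst p < k \<Longrightarrow> (\<lambda>\<omega>. \<omega> p) \<in> measurable MM N"
  shows "X k \<in> measurable MM (count_space (Sset k)) \<and> (\<forall>i. (\<lambda>\<omega>. Mo k \<omega> i) \<in> borel_measurable MM)"
  using assms
proof (induction k)
  case 0
  then show ?case by (simp add: X_0 Mo_0 measurable_count_space_eq2 finite_Sset)
next
  case (Suc k)
  have IH: "X k \<in> measurable MM (count_space (Sset k))" "\<And>i. (\<lambda>\<omega>. Mo k \<omega> i) \<in> borel_measurable MM"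
    using Suc by auto
  have gtm: "(\<lambda>\<omega>. gt k \<omega> i) \<in> borel_measurable MM" for i
    unfolding gt_def
    by (rule measurable_compose_countable'[where f = "\<lambda>v \<omega>. minibatch d G k v \<omega> i" and I = "Sset k", OF _ IH(1)])
       (auto intro!: minibatch_meas Suc.prems countable_finite finite_Sset)
  have dirm: "(\<lambda>\<omega>. dir k \<omega> i) \<in> borel_measurable MM" for i
    unfolding dir_def using gtm IH(2) by measurable
  define sv where "sv \<omega> = (\<lambda>i. if i < d then sgn (dir k \<omega> i) else 0)" for \<omega>
  have svm: "sv \<in> measurable MM (count_space Tset)"
  proof (subst measurable_count_space_eq2[OF finite_Tset], intro conjI ballI)
    show "sv \<in> space MM \<rightarrow> Tset" using sv_in_T by (auto simp: sv_def)
    fix s assume s: "s \<in> Tset"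
    have "sv -` {s} \<inter> space MM = {\<omega> \<in> space MM. \<forall>i. i < d \<longrightarrow> sgn (dir k \<omega> i) = s i}"
      using Tset_zero[OF s] by (auto simp: sv_def fun_eq_iff)
    also have "\<dots> \<in> sets MM" using dirm by measurable
    finally show "sv -` {s} \<inter> space MM \<in> sets MM" .
  qed
  have Xm: "X (Suc k) \<in> measurable MM (count_space (Sset (Suc k)))"
  proof -
    have eq: "X (Suc k) = (\<lambda>\<omega>. (\<lambda>v \<omega>. (\<lambda>i. v i - dk k * sv \<omega> i)) (X k \<omega>) \<omega>)"
      by (simp add: fun_eq_iff X_Suc' sv_def)
    show ?thesis unfolding eq
    proof (rule measurable_compose_countable'[OF _ IH(1) countable_finite[OF finite_Sset]])
      fix v assume v: "v \<in> Sset k"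
      have "(\<lambda>s. (\<lambda>i. v i - dk k * s i)) \<in> measurable (count_space Tset) (count_space (Sset (Suc k)))"
        using v by auto
      from measurable_compose[OF svm this]
      show "(\<lambda>\<omega>. \<lambda>i. v i - dk k * sv \<omega> i) \<in> measurable MM (count_space (Sset (Suc k)))" by simp
    qed
  qed
  moreover have "(\<lambda>\<omega>. Mo (Suc k) \<omega> i) \<in> borel_measurable MM" for i
    unfolding Mo_Suc using gtm IH(2) by measurable
  ultimately show ?case by auto
qed

lemma X_local:
  "(\<And>p. fst p < k \<Longrightarrow> \<omega> p = \<omega>' p) \<Longrightarrow> X k \<omega> = X k \<omega>' \<and> Mo k \<omega> = Mo k \<omega>'"
proof (induction k)
  case 0 then show ?case by (simp add: X_0 Mo_0)
next
  case (Suc k)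
  then have IH: "X k \<omega> = X k \<omega>'" "Mo k \<omega> = Mo k \<omega>'" by auto
  have om: "\<And>j. \<omega> (k, j) = \<omega>' (k, j)" using Suc.prems by simp
  have "gt k \<omega> = gt k \<omega>'"
    unfolding gt_def minibatch_def IH
  proof (intro ext)
    fix i
    have "(\<Sum>j<k + 1. G (X k \<omega>') (\<omega> (k, j)) i) = (\<Sum>j<k + 1. G (X k \<omega>') (\<omega>' (k, j)) i)"
      using om by presburger
    then show "(if i < d then (\<Sum>j<k + 1. G (X k \<omega>') (\<omega> (k, j)) i) / real (k + 1) else 0) =
      (if i < d then (\<Sum>j<k + 1. G (X k \<omega>') (\<omega>' (k, j)) i) / real (k + 1) else 0)" by simp
  qed
  then have "dir k \<omega> = dir k \<omega>'" by (simp add: fun_eq_iff dir_def IH)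
  then have D: "\<And>i. dir k \<omega> i = dir k \<omega>' i" by simp
  have E: "\<And>i. gt k \<omega> i = gt k \<omega>' i" using \<open>gt k \<omega> = gt k \<omega>'\<close> by simp
  have "X (Suc k) \<omega> = X (Suc k) \<omega>'"
    unfolding X_Suc IH(1) by (intro ext) (simp only: D)
  moreover have "Mo (Suc k) \<omega> = Mo (Suc k) \<omega>'"
    unfolding Mo_Suc IH(2) by (intro ext) (simp only: E)
  ultimately show ?case by simp
qed

definition "PM = PiM UNIV (\<lambda>_::nat \<times> nat. N)"

lemma PM_prob: "prob_space PM"
  unfolding PM_def by (intro prob_space_PiM probN)

lemma comp_meas_PM: "(\<lambda>\<omega>. \<omega> p) \<in> measurable PM N"
  unfolding PM_def by (rule measurable_component_singleton) simp

lemma comp_distr: "distr PM N (\<lambda>\<omega>. \<omega> p) = N"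
  unfolding PM_def by (intro distr_PiM_component probN) simp

lemma indep_components: "prob_space.indep_vars PM (\<lambda>_. N) (\<lambda>p \<omega>. \<omega> p) UNIV"
proof -
  interpret prob_space PM by (rule PM_prob)
  show ?thesis
  proof (subst indep_vars_iff_distr_eq_PiM)
    show "UNIV \<noteq> {}" by simp
    show "random_variable N (\<lambda>\<omega>. \<omega> p)" for p by (rule comp_meas_PM)
    have e: "(\<lambda>x. restrict x UNIV) = (\<lambda>x. x)" by (simp add: fun_eq_iff)
    show "distr PM (Pi\<^sub>M UNIV (\<lambda>i. N)) (\<lambda>x. \<lambda>i\<in>UNIV. x i) = Pi\<^sub>M UNIV (\<lambda>i. distr PM N (\<lambda>\<omega>. \<omega> i))"
      using comp_distr by (simp add: PM_def[symmetric] e)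
  qed
qed

lemma indep_restr:
  assumes "A \<inter> B = {}" "\<phi> \<in> borel_measurable (PiM A (\<lambda>_. N))" "\<psi> \<in> borel_measurable (PiM B (\<lambda>_. N))"
  shows "prob_space.indep_var PM borel (\<lambda>\<omega>. \<phi> (restrict \<omega> A)) borel (\<lambda>\<omega>. \<psi> (restrict \<omega> B))"
proof -
  interpret prob_space PM by (rule PM_prob)
  have "indep_var (PiM A (\<lambda>_. N)) (\<lambda>\<omega>. restrict (\<lambda>i. \<omega> i) A) (PiM B (\<lambda>_. N)) (\<lambda>\<omega>. restrict (\<lambda>i. \<omega> i) B)"
    using assms(1) by (intro indep_var_restrict[OF indep_components]) auto
  from indep_var_compose[OF this assms(2,3)] show ?thesis by (simp add: comp_def)
qed

lemma comp_integral:
  fixes h :: "real \<Rightarrow> real"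
  assumes "h \<in> borel_measurable N" "integrable N h"
  shows "integrable PM (\<lambda>\<omega>. h (\<omega> p)) \<and> (\<integral>\<omega>. h (\<omega> p) \<partial>PM) = (\<integral>u. h u \<partial>N)"
proof
  show "integrable PM (\<lambda>\<omega>. h (\<omega> p))"
    using integrable_distr_eq[OF comp_meas_PM assms(1), of p] assms(2) by (simp add: comp_distr)
  show "(\<integral>\<omega>. h (\<omega> p) \<partial>PM) = (\<integral>u. h u \<partial>N)"
    using integral_distr[OF comp_meas_PM assms(1), of p] by (simp add: comp_distr)
qed

lemma HH:
  fixes j l l' :: nat
  assumes v: "v \<in> supp_vec d" and i: "i < d"
  shows "integrable PM (\<lambda>\<omega>. (G v (\<omega> (j,l)) i - g v i) * (G v (\<omega> (j,l')) i - g v i)) \<and>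
    (\<integral>\<omega>. (G v (\<omega> (j,l)) i - g v i) * (G v (\<omega> (j,l')) i - g v i) \<partial>PM) =
      (if l = l' then (\<integral>u. (G v u i - g v i)\<^sup>2 \<partial>N) else 0)"
proof -
  interpret N: prob_space N by (rule probN)
  interpret P: prob_space PM by (rule PM_prob)
  define h where "h u = G v u i - g v i" for u
  have hm: "h \<in> borel_measurable N" unfolding h_def using G_meas[OF i] by measurable
  have hint: "integrable N h" unfolding h_def using Gint v i by auto
  have h0: "(\<integral>u. h u \<partial>N) = 0"
  proof -
    have "(\<integral>u. G v u i - g v i \<partial>N) = (\<integral>u. G v u i \<partial>N) - (\<integral>u. g v i \<partial>N)"
      using Gint v i by (intro Bochner_Integration.integral_diff) auto
    then show ?thesis using Gint v i by (simp add: h_def N.prob_space)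
  qed
  have h2int: "integrable N (\<lambda>u. (h u)\<^sup>2)" unfolding h_def using Gvar v i by auto
  show ?thesis
  proof (cases "l = l'")
    case True
    have "integrable PM (\<lambda>\<omega>. (h (\<omega> (j,l)))\<^sup>2) \<and> (\<integral>\<omega>. (h (\<omega> (j,l)))\<^sup>2 \<partial>PM) = (\<integral>u. (h u)\<^sup>2 \<partial>N)"
      using comp_integral[of "\<lambda>u. (h u)\<^sup>2"] hm h2int by auto
    then show ?thesis using True by (simp add: h_def power2_eq_square)
  next
    case False
    have ind: "P.indep_var borel (\<lambda>\<omega>. (\<lambda>\<eta>. h (\<eta> (j,l))) (restrict \<omega> {(j,l)})) borel (\<lambda>\<omega>. (\<lambda>\<eta>. h (\<eta> (j,l'))) (restrict \<omega> {(j,l')}))"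
    proof (rule indep_restr)
      show "{(j,l)} \<inter> {(j,l')} = {}" using False by auto
      show "(\<lambda>\<eta>. h (\<eta> (j,l))) \<in> borel_measurable (PiM {(j,l)} (\<lambda>_. N))" using hm by measurable
      show "(\<lambda>\<eta>. h (\<eta> (j,l'))) \<in> borel_measurable (PiM {(j,l')} (\<lambda>_. N))" using hm by measurable
    qed
    then have ind': "P.indep_var borel (\<lambda>\<omega>. h (\<omega> (j,l))) borel (\<lambda>\<omega>. h (\<omega> (j,l')))" by simp
    have i1: "integrable PM (\<lambda>\<omega>. h (\<omega> (j,l)))" and e1: "(\<integral>\<omega>. h (\<omega> (j,l)) \<partial>PM) = 0"
      using comp_integral[OF hm hint] h0 by auto
    have i2: "integrable PM (\<lambda>\<omega>. h (\<omega> (j,l')))"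
      using comp_integral[OF hm hint] by auto
    show ?thesis
      using P.indep_var_integrable[OF ind' i1 i2] P.indep_var_lebesgue_integral[OF ind' i1 i2] e1 False
      by (simp add: h_def)
  qed
qed

lemma Y_sq:
  fixes j :: nat
  assumes v: "v \<in> supp_vec d" and i: "i < d"
  shows "integrable PM (\<lambda>\<omega>. ((\<Sum>l<j+1. G v (\<omega> (j,l)) i) / real (j+1) - g v i)\<^sup>2) \<and>
    (\<integral>\<omega>. ((\<Sum>l<j+1. G v (\<omega> (j,l)) i) / real (j+1) - g v i)\<^sup>2 \<partial>PM) \<le> (\<sigma> i)\<^sup>2 / real (j+1)"
proof -
  define n where "n = j + 1"
  define H where "H l \<omega> = G v (\<omega> (j,l)) i - g v i" for l :: nat and \<omega> :: "nat \<times> nat \<Rightarrow> real"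
  have n0: "real n > 0" by (simp add: n_def)
  have eqY: "((\<Sum>l<n. G v (\<omega> (j,l)) i) / real n - g v i)\<^sup>2 = (\<Sum>l<n. \<Sum>l'<n. H l \<omega> * H l' \<omega>) / (real n)\<^sup>2" for \<omega>
  proof -
    have "(\<Sum>l<n. G v (\<omega> (j,l)) i) / real n - g v i = (\<Sum>l<n. H l \<omega>) / real n"
      using n0 by (simp add: H_def sum_subtractf field_simps)
    then show ?thesis by (simp add: power2_eq_square sum_product power_divide)
  qed
  have HHi: "integrable PM (\<lambda>\<omega>. H l \<omega> * H l' \<omega>)" for l l'
    using HH[OF v i] by (simp add: H_def)
  have HHe: "(\<integral>\<omega>. H l \<omega> * H l' \<omega> \<partial>PM) = (if l = l' then (\<integral>u. (G v u i - g v i)\<^sup>2 \<partial>N) else 0)" for l l'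
    using HH[OF v i] by (simp add: H_def)
  have int: "integrable PM (\<lambda>\<omega>. (\<Sum>l<n. \<Sum>l'<n. H l \<omega> * H l' \<omega>) / (real n)\<^sup>2)"
    using HHi by (intro integrable_divide integrable_sum) auto
  have "(\<integral>\<omega>. (\<Sum>l<n. \<Sum>l'<n. H l \<omega> * H l' \<omega>) / (real n)\<^sup>2 \<partial>PM)
      = (\<Sum>l<n. \<Sum>l'<n. (\<integral>\<omega>. H l \<omega> * H l' \<omega> \<partial>PM)) / (real n)\<^sup>2"
    using HHi by (simp add: integral_sum integrable_sum)
  also have "\<dots> = real n * (\<integral>u. (G v u i - g v i)\<^sup>2 \<partial>N) / (real n)\<^sup>2"
    by (simp add: HHe)
  also have "\<dots> \<le> real n * (\<sigma> i)\<^sup>2 / (real n)\<^sup>2"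
    using Gvar v i n0 by (intro divide_right_mono mult_left_mono) auto
  also have "\<dots> = (\<sigma> i)\<^sup>2 / real n" using n0 by (simp add: power2_eq_square)
  finally show ?thesis using int unfolding eqY n_def[symmetric] by simp
qed

lemma amgm_bound:
  fixes x q s :: real
  assumes h: "\<And>a. a > 0 \<Longrightarrow> x \<le> (q / a + a) / 2" and q: "q \<le> s\<^sup>2" and s: "s \<ge> 0"
  shows "x \<le> s"
proof (cases "s > 0")
  case True
  have "x \<le> (q / s + s) / 2" using h True by blast
  also have "q / s \<le> s\<^sup>2 / s" using q True by (intro divide_right_mono) auto
  then have "(q / s + s) / 2 \<le> (s\<^sup>2 / s + s) / 2" by (intro divide_right_mono add_right_mono) (use q s in auto)
  also have "s\<^sup>2 / s = s" using True by (simp add: power2_eq_square)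
  finally show ?thesis by simp
next
  case False
  then have s0: "s = 0" using s by simp
  show ?thesis
  proof (rule ccontr)
    assume "\<not> x \<le> s"
    then have x: "x > 0" using s0 by simp
    have "x \<le> (q / x + x) / 2" using h x by blast
    moreover have "q / x \<le> 0" using q s0 x by (simp add: divide_nonpos_pos)
    ultimately show False using x by simp
  qed
qed

lemma Y_abs:
  fixes j :: nat
  assumes v: "v \<in> supp_vec d" and i: "i < d"
  shows "integrable PM (\<lambda>\<omega>. \<bar>(\<Sum>l<j+1. G v (\<omega> (j,l)) i) / real (j+1) - g v i\<bar>) \<and>
    (\<integral>\<omega>. \<bar>(\<Sum>l<j+1. G v (\<omega> (j,l)) i) / real (j+1) - g v i\<bar> \<partial>PM) \<le> \<sigma> i / sqrt (real (j+1))"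
proof -
  interpret P: prob_space PM by (rule PM_prob)
  define Y where "Y \<omega> = (\<Sum>l<j+1. G v (\<omega> (j,l)) i) / real (j+1) - g v i" for \<omega> :: "nat \<times> nat \<Rightarrow> real"
  have Gi: "integrable PM (\<lambda>\<omega>. G v (\<omega> (j,l)) i)" for l
    using comp_integral[of "\<lambda>u. G v u i", OF G_meas[OF i]] Gint v i by auto
  have Yi: "integrable PM Y" unfolding Y_def using Gi by (intro Bochner_Integration.integrable_diff integrable_divide integrable_sum) auto
  have Y2: "integrable PM (\<lambda>\<omega>. (Y \<omega>)\<^sup>2)" "(\<integral>\<omega>. (Y \<omega>)\<^sup>2 \<partial>PM) \<le> (\<sigma> i)\<^sup>2 / real (j+1)"
    using Y_sq[OF v i, of j] unfolding Y_def by auto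
  have Yabs: "integrable PM (\<lambda>\<omega>. \<bar>Y \<omega>\<bar>)" using Yi by (rule integrable_abs)
  have "(\<integral>\<omega>. \<bar>Y \<omega>\<bar> \<partial>PM) \<le> \<sigma> i / sqrt (real (j+1))"
  proof (rule amgm_bound)
    fix a :: real assume a: "a > 0"
    have pw: "\<bar>Y \<omega>\<bar> \<le> ((Y \<omega>)\<^sup>2 / a + a) / 2" for \<omega>
    proof -
      have "0 \<le> (\<bar>Y \<omega>\<bar> - a)\<^sup>2" by simp
      then have "2 * a * \<bar>Y \<omega>\<bar> \<le> (Y \<omega>)\<^sup>2 + a\<^sup>2" by (simp add: power2_diff power2_abs mult_ac)
      then show ?thesis using a by (simp add: field_simps power2_eq_square)
    qed
    have int2: "integrable PM (\<lambda>\<omega>. ((Y \<omega>)\<^sup>2 / a + a) / 2)"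
      using Y2(1) by (intro integrable_divide Bochner_Integration.integrable_add) auto
    have "(\<integral>\<omega>. \<bar>Y \<omega>\<bar> \<partial>PM) \<le> (\<integral>\<omega>. ((Y \<omega>)\<^sup>2 / a + a) / 2 \<partial>PM)"
      using Yabs int2 pw by (intro integral_mono) auto
    also have "\<dots> = ((\<integral>\<omega>. (Y \<omega>)\<^sup>2 \<partial>PM) / a + a) / 2"
      using Y2(1) by (simp add: Bochner_Integration.integral_add P.prob_space)
    finally show "(\<integral>\<omega>. \<bar>Y \<omega>\<bar> \<partial>PM) \<le> ((\<integral>\<omega>. (Y \<omega>)\<^sup>2 \<partial>PM) / a + a) / 2" .
  next
    show "(\<integral>\<omega>. (Y \<omega>)\<^sup>2 \<partial>PM) \<le> (\<sigma> i / sqrt (real (j+1)))\<^sup>2"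
      using Y2(2) by (simp add: power_divide)
  next
    show "0 \<le> \<sigma> i / sqrt (real (j+1))" using snn i by simp
  qed
  then show ?thesis using Yabs unfolding Y_def by simp
qed

lemma ind_meas:
  assumes "\<And>p. fst p < j \<Longrightarrow> (\<lambda>\<omega>. \<omega> p) \<in> measurable MM N"
  shows "(\<lambda>\<omega>. if X j \<omega> = v then 1 else (0::real)) \<in> borel_measurable MM"
proof -
  have "X j \<in> measurable MM (count_space (Sset j))" using meas_X[OF assms] by blast
  moreover have "(\<lambda>x. if x = v then 1 else (0::real)) \<in> borel_measurable (count_space (Sset j))" by simp
  ultimately show ?thesis using measurable_compose by blast
qed

lemma xi_bound:
  fixes j :: nat
  assumes i: "i < d"
  shows "integrable PM (\<lambda>\<omega>. \<bar>\<xi> j \<omega> i\<bar>) \<and> (\<integral>\<omega>. \<bar>\<xi> j \<omega> i\<bar> \<partial>PM) \<le> \<sigma> i / sqrt (real (j+1))"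
proof -
  interpret P: prob_space PM by (rule PM_prob)
  define Yv where "Yv v \<omega> = (\<Sum>l<j+1. G v (\<omega> (j,l)) i) / real (j+1) - g v i"
    for v :: "nat \<Rightarrow> real" and \<omega> :: "nat \<times> nat \<Rightarrow> real"
  define ind where "ind v \<omega> = (if X j \<omega> = v then 1 else (0::real))"
    for v :: "nat \<Rightarrow> real" and \<omega> :: "nat \<times> nat \<Rightarrow> real"
  define A where "A = {p :: nat \<times> nat. fst p < j}"
  define B where "B = {p :: nat \<times> nat. fst p = j}"
  define s where "s = \<sigma> i / sqrt (real (j+1))"
  have s0: "s \<ge> 0" using snn i by (simp add: s_def)
  have xi_eq: "\<bar>\<xi> j \<omega> i\<bar> = (\<Sum>v\<in>Sset j. ind v \<omega> * \<bar>Yv v \<omega>\<bar>)" for \<omega>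
  proof -
    have "(\<Sum>v\<in>Sset j. ind v \<omega> * \<bar>Yv v \<omega>\<bar>) = (\<Sum>v\<in>Sset j. if X j \<omega> = v then \<bar>Yv v \<omega>\<bar> else 0)"
      by (intro sum.cong) (auto simp: ind_def)
    also have "\<dots> = \<bar>Yv (X j \<omega>) \<omega>\<bar>" using X_in_S finite_Sset by (simp add: sum.delta)
    also have "\<dots> = \<bar>\<xi> j \<omega> i\<bar>" using i by (simp add: Yv_def \<xi>_def gt_def minibatch_def)
    finally show ?thesis by simp
  qed
  have ind_sum: "(\<Sum>v\<in>Sset j. ind v \<omega>) = 1" for \<omega>
    using X_in_S finite_Sset by (simp add: ind_def sum.delta)
  have indm: "ind v \<in> borel_measurable PM" for v
    unfolding ind_def by (rule ind_meas) (rule comp_meas_PM)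
  have indi: "integrable PM (ind v)" for v
    by (rule P.integrable_const_bound[where B=1]) (auto simp: ind_def indm)
  have ind0: "(\<integral>\<omega>. ind v \<omega> \<partial>PM) \<ge> 0" for v by (simp add: ind_def)
  have trm: "integrable PM (\<lambda>\<omega>. ind v \<omega> * \<bar>Yv v \<omega>\<bar>) \<and>
      (\<integral>\<omega>. ind v \<omega> * \<bar>Yv v \<omega>\<bar> \<partial>PM) \<le> (\<integral>\<omega>. ind v \<omega> \<partial>PM) * s" if v: "v \<in> Sset j" for v
  proof -
    have vs: "v \<in> supp_vec d" using v Sset_supp by blast
    have Yabs: "integrable PM (\<lambda>\<omega>. \<bar>Yv v \<omega>\<bar>)" "(\<integral>\<omega>. \<bar>Yv v \<omega>\<bar> \<partial>PM) \<le> s"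
      using Y_abs[OF vs i, of j] by (auto simp: Yv_def s_def)
    have phim: "(\<lambda>\<eta>. if X j \<eta> = v then 1 else (0::real)) \<in> borel_measurable (PiM A (\<lambda>_. N))"
      by (rule ind_meas) (auto simp: A_def intro!: measurable_component_singleton)
    have psim: "(\<lambda>\<eta>. \<bar>Yv v \<eta>\<bar>) \<in> borel_measurable (PiM B (\<lambda>_. N))"
    proof -
      have "(\<lambda>\<eta>. G v (\<eta> (j,l)) i) \<in> borel_measurable (PiM B (\<lambda>_. N))" for l
        using measurable_compose[OF measurable_component_singleton[of "(j,l)" B "\<lambda>_. N"] G_meas[OF i]]
        by (simp add: B_def)
      then show ?thesis unfolding Yv_def by measurable
    qed
    have "P.indep_var borel (\<lambda>\<omega>. (\<lambda>\<eta>. if X j \<eta> = v then 1 else (0::real)) (restrict \<omega> A))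
        borel (\<lambda>\<omega>. (\<lambda>\<eta>. \<bar>Yv v \<eta>\<bar>) (restrict \<omega> B))"
      by (rule indep_restr[OF _ phim psim]) (auto simp: A_def B_def)
    moreover have "(\<lambda>\<omega>. (\<lambda>\<eta>. if X j \<eta> = v then 1 else (0::real)) (restrict \<omega> A)) = ind v"
    proof
      fix \<omega>
      have "X j (restrict \<omega> A) = X j \<omega>" using X_local[of j "restrict \<omega> A" \<omega>] by (auto simp: A_def)
      then show "(\<lambda>\<eta>. if X j \<eta> = v then 1 else (0::real)) (restrict \<omega> A) = ind v \<omega>" by (simp add: ind_def)
    qed
    moreover have "(\<lambda>\<omega>. (\<lambda>\<eta>. \<bar>Yv v \<eta>\<bar>) (restrict \<omega> B)) = (\<lambda>\<omega>. \<bar>Yv v \<omega>\<bar>)"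
      by (simp add: Yv_def B_def)
    ultimately have ind: "P.indep_var borel (ind v) borel (\<lambda>\<omega>. \<bar>Yv v \<omega>\<bar>)" by simp
    show ?thesis
    proof
      show "integrable PM (\<lambda>\<omega>. ind v \<omega> * \<bar>Yv v \<omega>\<bar>)"
        by (rule P.indep_var_integrable[OF ind indi Yabs(1)])
      have "(\<integral>\<omega>. ind v \<omega> * \<bar>Yv v \<omega>\<bar> \<partial>PM) = (\<integral>\<omega>. ind v \<omega> \<partial>PM) * (\<integral>\<omega>. \<bar>Yv v \<omega>\<bar> \<partial>PM)"
        by (rule P.indep_var_lebesgue_integral[OF ind indi Yabs(1)])
      also have "\<dots> \<le> (\<integral>\<omega>. ind v \<omega> \<partial>PM) * s"
        using Yabs(2) ind0 by (intro mult_left_mono) auto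
      finally show "(\<integral>\<omega>. ind v \<omega> * \<bar>Yv v \<omega>\<bar> \<partial>PM) \<le> (\<integral>\<omega>. ind v \<omega> \<partial>PM) * s" .
    qed
  qed
  have int: "integrable PM (\<lambda>\<omega>. \<bar>\<xi> j \<omega> i\<bar>)"
    unfolding xi_eq using trm by (intro Bochner_Integration.integrable_sum) auto
  have "(\<integral>\<omega>. \<bar>\<xi> j \<omega> i\<bar> \<partial>PM) = (\<Sum>v\<in>Sset j. (\<integral>\<omega>. ind v \<omega> * \<bar>Yv v \<omega>\<bar> \<partial>PM))"
    unfolding xi_eq using trm by (intro Bochner_Integration.integral_sum) auto
  also have "\<dots> \<le> (\<Sum>v\<in>Sset j. (\<integral>\<omega>. ind v \<omega> \<partial>PM) * s)"
    using trm by (intro sum_mono) auto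
  also have "\<dots> = (\<integral>\<omega>. (\<Sum>v\<in>Sset j. ind v \<omega>) \<partial>PM) * s"
    using indi by (simp add: integral_sum sum_distrib_right)
  also have "\<dots> = s" by (simp add: ind_sum P.prob_space)
  finally show ?thesis using int by (simp add: s_def)
qed

lemma X_meas_PM: "X k \<in> measurable PM (count_space (Sset k))"
  using meas_X[of k PM] comp_meas_PM by blast

lemma simple_int: "integrable PM (\<lambda>\<omega>. \<phi> (X k \<omega>) :: real)"
proof -
  interpret P: prob_space PM by (rule PM_prob)
  have "\<phi> \<in> borel_measurable (count_space (Sset k))" by simp
  from measurable_compose[OF X_meas_PM this]
  have m: "(\<lambda>\<omega>. \<phi> (X k \<omega>)) \<in> borel_measurable PM" .
  show ?thesis
  proof (rule P.integrable_const_bound[where B = "\<Sum>v\<in>Sset k. \<bar>\<phi> v\<bar>"])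
    show "AE x in PM. norm (\<phi> (X k x)) \<le> (\<Sum>v\<in>Sset k. \<bar>\<phi> v\<bar>)"
      using X_in_S finite_Sset
      by (intro AE_I2) (simp add: member_le_sum[where f = "\<lambda>v. \<bar>\<phi> v\<bar>"])
  qed (rule m)
qed

lemma exp_step:
  assumes Bd: "\<forall>k. (\<Sum>t\<le>k. \<beta>^t * (real t + 1)\<^sup>2) \<le> B" and "C \<le> k"
  shows "(\<integral>\<omega>. f (X (Suc k) \<omega>) \<partial>PM) \<le> (\<integral>\<omega>. f (X k \<omega>) \<partial>PM) - dk k * (\<integral>\<omega>. l1norm d (g (X k \<omega>)) \<partial>PM)
     + (\<delta>\<^sup>2 * Lsum * (6 * B + 1/2) + 2 * \<delta> * (\<Sum>i<d. \<sigma> i) * B) / (real k + 1)"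
proof -
  interpret P: prob_space PM by (rule PM_prob)
  define R where "R = 2 * dk k * (\<Sum>t\<le>k. \<beta>^t * (3 * Lsum * (\<Sum>s\<in>{k-t..<k}. dk s))) + 1/2 * (dk k)\<^sup>2 * Lsum"
  define Z where "Z \<omega> = 2 * dk k * (\<Sum>t\<le>k. \<beta>^t * (\<Sum>i<d. \<bar>\<xi> (k-t) \<omega> i\<bar>))" for \<omega>
  have xi_i: "integrable PM (\<lambda>\<omega>. \<bar>\<xi> j \<omega> i\<bar>)" if "i < d" for j i using xi_bound[OF that] by blast
  have Zi: "integrable PM Z" unfolding Z_def
    using xi_i by (intro integrable_mult_right Bochner_Integration.integrable_sum) auto
  have pw: "f (X (Suc k) \<omega>) \<le> f (X k \<omega>) - dk k * l1norm d (g (X k \<omega>)) + R + Z \<omega>" for \<omega>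
  proof -
    have "2 * dk k * (\<Sum>t\<le>k. \<beta>^t * (3 * Lsum * (\<Sum>s\<in>{k-t..<k}. dk s) + (\<Sum>i<d. \<bar>\<xi> (k-t) \<omega> i\<bar>)))
      = 2 * dk k * (\<Sum>t\<le>k. \<beta>^t * (3 * Lsum * (\<Sum>s\<in>{k-t..<k}. dk s))) + Z \<omega>"
      by (simp add: Z_def distrib_left sum.distrib)
    then show ?thesis using step_bound[OF assms(2), of \<omega>] by (simp add: R_def)
  qed
  have i1: "integrable PM (\<lambda>\<omega>. f (X k \<omega>))" "integrable PM (\<lambda>\<omega>. f (X (Suc k) \<omega>))"
    "integrable PM (\<lambda>\<omega>. l1norm d (g (X k \<omega>)))" by (rule simple_int)+
  have "(\<integral>\<omega>. f (X (Suc k) \<omega>) \<partial>PM) \<le> (\<integral>\<omega>. f (X k \<omega>) - dk k * l1norm d (g (X k \<omega>)) + R + Z \<omega> \<partial>PM)"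
    using i1 Zi pw by (intro integral_mono) auto
  also have "\<dots> = (\<integral>\<omega>. f (X k \<omega>) \<partial>PM) - dk k * (\<integral>\<omega>. l1norm d (g (X k \<omega>)) \<partial>PM) + R + (\<integral>\<omega>. Z \<omega> \<partial>PM)"
    using i1 Zi by (simp add: P.prob_space)
  also have "(\<integral>\<omega>. Z \<omega> \<partial>PM) = 2 * dk k * (\<Sum>t\<le>k. \<beta>^t * (\<Sum>i<d. (\<integral>\<omega>. \<bar>\<xi> (k-t) \<omega> i\<bar> \<partial>PM)))"
  proof -
    have int_i: "integrable PM (\<lambda>\<omega>. \<Sum>i<d. \<bar>\<xi> (k-t) \<omega> i\<bar>)" for t
      using xi_i by (intro Bochner_Integration.integrable_sum) auto
    have eq1: "(\<integral>\<omega>. (\<Sum>i<d. \<bar>\<xi> (k-t) \<omega> i\<bar>) \<partial>PM) = (\<Sum>i<d. (\<integral>\<omega>. \<bar>\<xi> (k-t) \<omega> i\<bar> \<partial>PM))" for t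
      using xi_i by (intro Bochner_Integration.integral_sum) auto
    have "(\<integral>\<omega>. (\<Sum>t\<le>k. \<beta>^t * (\<Sum>i<d. \<bar>\<xi> (k-t) \<omega> i\<bar>)) \<partial>PM)
        = (\<Sum>t\<le>k. (\<integral>\<omega>. \<beta>^t * (\<Sum>i<d. \<bar>\<xi> (k-t) \<omega> i\<bar>) \<partial>PM))"
      using int_i by (intro Bochner_Integration.integral_sum integrable_mult_right) auto
    also have "\<dots> = (\<Sum>t\<le>k. \<beta>^t * (\<Sum>i<d. (\<integral>\<omega>. \<bar>\<xi> (k-t) \<omega> i\<bar> \<partial>PM)))"
      by (simp add: eq1)
    finally show ?thesis unfolding Z_def by simp
  qed
  also have "\<dots> \<le> 2 * dk k * (\<Sum>t\<le>k. \<beta>^t * ((\<Sum>i<d. \<sigma> i) / sqrt (real (k - t) + 1)))"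
  proof (intro mult_left_mono sum_mono)
    fix t
    have "(\<Sum>i<d. (\<integral>\<omega>. \<bar>\<xi> (k-t) \<omega> i\<bar> \<partial>PM)) \<le> (\<Sum>i<d. \<sigma> i / sqrt (real (k - t + 1)))"
      using xi_bound by (intro sum_mono) auto
    also have "\<dots> = (\<Sum>i<d. \<sigma> i) / sqrt (real (k - t) + 1)"
      by (simp add: sum_divide_distrib add.commute)
    finally show "(\<Sum>i<d. (\<integral>\<omega>. \<bar>\<xi> (k-t) \<omega> i\<bar> \<partial>PM)) \<le> (\<Sum>i<d. \<sigma> i) / sqrt (real (k - t) + 1)" .
  qed (use dk_nonneg beta0 in auto)
  also have "\<dots> \<le> 2 * \<delta> * (\<Sum>i<d. \<sigma> i) * B / (real k + 1)"
    using snn by (intro noise_det_bound Bd sum_nonneg) auto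
  finally have "(\<integral>\<omega>. f (X (Suc k) \<omega>) \<partial>PM) \<le> (\<integral>\<omega>. f (X k \<omega>) \<partial>PM) - dk k * (\<integral>\<omega>. l1norm d (g (X k \<omega>)) \<partial>PM)
      + R + 2 * \<delta> * (\<Sum>i<d. \<sigma> i) * B / (real k + 1)" by simp
  moreover have "R \<le> \<delta>\<^sup>2 * Lsum * (6 * B + 1/2) / (real k + 1)" unfolding R_def by (rule det_bound[OF Bd])
  ultimately show ?thesis by (simp add: add_divide_distrib)
qed

lemma main_bound:
  assumes Bd: "\<forall>k. (\<Sum>t\<le>k. \<beta>^t * (real t + 1)\<^sup>2) \<le> B" and K: "2 * C + 1 \<le> K"
  shows "(\<integral>\<omega>. 1 / (real K - real C) * (\<Sum>k\<in>{C..<K}. l1norm d (g (X k \<omega>))) \<partial>PM)\<^sup>2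
    \<le> 4 * (max 1 (max ((6 * B + 1/2) * (1 - \<beta>)) (2 * B / sqrt (1 - \<beta>))))\<^sup>2 / sqrt (real (\<Sum>k<K. k + 1)) *
      (((\<integral>\<omega>. f (X C \<omega>) \<partial>PM) - fstar) / \<delta> + (1 + ln (real (\<Sum>k<K. k + 1))) *
        (\<delta> * (\<Sum>i<d. L i) / (1 - \<beta>) + (\<Sum>i<d. \<sigma> i) * sqrt (1 - \<beta>)))\<^sup>2"
proof -
  interpret P: prob_space PM by (rule PM_prob)
  define c3 where "c3 = max 1 (max ((6 * B + 1/2) * (1 - \<beta>)) (2 * B / sqrt (1 - \<beta>)))"
  define E where "E k = (\<integral>\<omega>. l1norm d (g (X k \<omega>)) \<partial>PM)" for k
  define F where "F k = (\<integral>\<omega>. f (X k \<omega>) \<partial>PM)" for k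
  define Nc where "Nc = real (\<Sum>k<K. k + 1)"
  define S where "S = (\<Sum>i<d. \<sigma> i)"
  define V where "V = \<delta> * Lsum / (1 - \<beta>) + S * sqrt (1 - \<beta>)"
  define c where "c = \<delta>\<^sup>2 * Lsum * (6 * B + 1/2) + 2 * \<delta> * S * B"
  define Br where "Br = (F C - fstar) / \<delta> + (1 + ln Nc) * V"
  have L0: "Lsum \<ge> 0" using Lnn unfolding Lsum_def by (intro sum_nonneg) auto
  have S0: "S \<ge> 0" using snn unfolding S_def by (intro sum_nonneg) auto
  have B0: "B \<ge> 0" using Bd[rule_format, of 0] by simp
  have b1: "1 - \<beta> > 0" using beta1 by simp
  have c31: "c3 \<ge> 1" by (simp add: c3_def)
  have K1: "K \<ge> 1" and KC: "C < K" and K2C: "2 * C \<le> K" using K by auto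
  have E0: "E k \<ge> 0" for k unfolding E_def l1norm_def by (intro Bochner_Integration.integral_nonneg sum_nonneg) auto
  have Fge: "F k \<ge> fstar" for k
  proof -
    have "(\<integral>\<omega>. fstar \<partial>PM) \<le> F k" unfolding F_def
      using simple_int fstar X_supp by (intro integral_mono) auto
    then show ?thesis by (simp add: P.prob_space)
  qed
  have step: "dk k * E k \<le> F k - F (Suc k) + c / (real k + 1)" if "C \<le> k" for k
    using exp_step[OF Bd that] by (simp add: E_def F_def c_def S_def add_divide_distrib)
  have tele: "(\<Sum>k\<in>{C..<K}. F k - F (Suc k)) = F C - F K"
  proof -
    have "(\<Sum>k\<in>{C..<K}. F k - F (Suc k)) = (\<Sum>k\<in>{C..<K}. -(F (Suc k) - F k))" by simp
    also have "\<dots> = - (\<Sum>k\<in>{C..<K}. F (Suc k) - F k)" by (rule sum_negf)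
    also have "\<dots> = F C - F K" using sum_Suc_diff'[of C K F] KC by simp
    finally show ?thesis .
  qed
  have Hb: "(\<Sum>k\<in>{C..<K}. 1 / (real k + 1)) \<le> 1 + ln Nc"
  proof -
    have "(\<Sum>k\<in>{C..<K}. 1 / (real k + 1)) \<le> (\<Sum>k<K. 1 / (real k + 1))"
      by (intro sum_mono2) auto
    also have "\<dots> \<le> 1 + ln (real K)" using harm_le_ln K1 by blast
    also have "ln (real K) \<le> ln Nc"
    proof -
      have "real K = (\<Sum>k<K. 1::real)" by simp
      also have "\<dots> \<le> Nc" unfolding Nc_def of_nat_sum by (intro sum_mono) auto
      finally show ?thesis using K1 by (intro ln_mono) auto
    qed
    finally show ?thesis by simp
  qed
  have Nc1: "Nc \<ge> 1"
  proof -
    have "real K = (\<Sum>k<K. 1::real)" by simp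
    also have "\<dots> \<le> Nc" unfolding Nc_def of_nat_sum by (intro sum_mono) auto
    finally show ?thesis using K1 by simp
  qed
  have NcK: "sqrt Nc \<le> real K"
  proof -
    have "Nc \<le> (\<Sum>k<K. real K)" unfolding Nc_def of_nat_sum by (intro sum_mono) auto
    also have "\<dots> = (real K)\<^sup>2" by (simp add: power2_eq_square)
    finally show ?thesis by (simp add: real_le_lsqrt)
  qed
  have sumE1: "(\<Sum>k\<in>{C..<K}. dk k * E k) \<le> F C - fstar + c * (1 + ln Nc)"
  proof -
    have "(\<Sum>k\<in>{C..<K}. dk k * E k) \<le> (\<Sum>k\<in>{C..<K}. F k - F (Suc k) + c / (real k + 1))"
      using step by (intro sum_mono) auto
    also have "\<dots> = F C - F K + c * (\<Sum>k\<in>{C..<K}. 1 / (real k + 1))"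
      by (simp add: sum.distrib tele sum_distrib_left)
    also have "\<dots> \<le> F C - fstar + c * (1 + ln Nc)"
      using Fge[of K] Hb L0 S0 B0 dpos by (intro add_mono mult_left_mono) (auto simp: c_def)
    finally show ?thesis .
  qed
  have sumE2: "(\<Sum>k\<in>{C..<K}. E k) \<le> sqrt (real K) / \<delta> * (\<Sum>k\<in>{C..<K}. dk k * E k)"
  proof -
    have "E k \<le> sqrt (real K) / \<delta> * (dk k * E k)" if "k \<in> {C..<K}" for k
    proof -
      have "sqrt (real k + 1) \<le> sqrt (real K)" using that by auto
      then have "1 \<le> sqrt (real K) / sqrt (real k + 1)" by simp
      also have "\<dots> = sqrt (real K) / \<delta> * dk k" using dpos by (simp add: dk_def add.commute)
      finally have a1: "1 \<le> sqrt (real K) / \<delta> * dk k" .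
      have "1 * E k \<le> (sqrt (real K) / \<delta> * dk k) * E k" using E0[of k] a1 by (intro mult_right_mono) auto
      then show ?thesis by (simp only: mult.assoc mult_1)
    qed
    then have "(\<Sum>k\<in>{C..<K}. E k) \<le> (\<Sum>k\<in>{C..<K}. sqrt (real K) / \<delta> * (dk k * E k))"
      by (intro sum_mono) auto
    then show ?thesis by (simp add: sum_distrib_left)
  qed
  have cV: "c \<le> \<delta> * c3 * V"
  proof -
    have a: "\<delta>\<^sup>2 * Lsum * (6 * B + 1/2) \<le> \<delta> * c3 * (\<delta> * Lsum / (1 - \<beta>))"
    proof -
      have "(6 * B + 1/2) * (1 - \<beta>) \<le> c3" by (simp add: c3_def)
      then have "(6 * B + 1/2) \<le> c3 / (1 - \<beta>)" using b1 by (simp add: pos_le_divide_eq)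
      then have "\<delta>\<^sup>2 * Lsum * (6 * B + 1/2) \<le> \<delta>\<^sup>2 * Lsum * (c3 / (1 - \<beta>))"
        using L0 by (intro mult_left_mono) auto
      then show ?thesis by (simp add: power2_eq_square field_simps)
    qed
    have b: "2 * \<delta> * S * B \<le> \<delta> * c3 * (S * sqrt (1 - \<beta>))"
    proof -
      have "2 * B / sqrt (1 - \<beta>) \<le> c3" by (simp add: c3_def)
      then have "2 * B \<le> c3 * sqrt (1 - \<beta>)" using b1 by (simp add: divide_le_eq)
      then have "\<delta> * S * (2 * B) \<le> \<delta> * S * (c3 * sqrt (1 - \<beta>))"
        using S0 dpos by (intro mult_left_mono) auto
      then show ?thesis by (simp add: algebra_simps)
    qed
    show ?thesis using a b by (simp add: c_def V_def distrib_left)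
  qed
  have V0: "V \<ge> 0" using L0 S0 dpos b1 by (simp add: V_def)
  have Br0: "Br \<ge> 0" using Fge[of C] dpos V0 Nc1 by (simp add: Br_def)
  have bound: "(\<Sum>k\<in>{C..<K}. E k) \<le> sqrt (real K) * (c3 * Br)"
  proof -
    have "(\<Sum>k\<in>{C..<K}. E k) \<le> sqrt (real K) / \<delta> * (F C - fstar + c * (1 + ln Nc))"
      using sumE2 sumE1 dpos by (smt (verit) divide_nonneg_pos mult_left_mono real_sqrt_ge_zero of_nat_0_le_iff)
    also have "\<dots> \<le> sqrt (real K) / \<delta> * (F C - fstar + \<delta> * c3 * V * (1 + ln Nc))"
      using cV Nc1 dpos by (intro mult_left_mono add_left_mono mult_right_mono) auto
    also have "\<dots> = sqrt (real K) * ((F C - fstar) / \<delta> + c3 * V * (1 + ln Nc))"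
      using dpos by (simp add: field_simps)
    also have "\<dots> \<le> sqrt (real K) * (c3 * ((F C - fstar) / \<delta>) + c3 * V * (1 + ln Nc))"
    proof -
      have z: "0 \<le> (F C - fstar) / \<delta>" using Fge[of C] dpos by simp
      have "1 * ((F C - fstar) / \<delta>) \<le> c3 * ((F C - fstar) / \<delta>)"
        using c31 z by (intro mult_right_mono) auto
      then have "(F C - fstar) / \<delta> \<le> c3 * ((F C - fstar) / \<delta>)" by simp
      then show ?thesis by (intro mult_left_mono add_right_mono) auto
    qed
    also have "\<dots> = sqrt (real K) * (c3 * Br)" by (simp add: Br_def algebra_simps)
    finally show ?thesis .
  qed
  have KC2: "real K / (real K - real C)\<^sup>2 \<le> 4 / sqrt Nc"
  proof -
    have kc: "real K - real C \<ge> real K / 2" using K2C by simp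
    have kc0: "real K / 2 > 0" using K1 by simp
    have "(real K / 2)\<^sup>2 \<le> (real K - real C)\<^sup>2" using kc kc0 by (intro power_mono) auto
    moreover have "0 < (real K - real C)\<^sup>2 * (real K / 2)\<^sup>2"
      using kc kc0 by (intro mult_pos_pos) auto
    ultimately have "real K / (real K - real C)\<^sup>2 \<le> real K / (real K / 2)\<^sup>2"
      by (intro divide_left_mono) auto
    also have "\<dots> = 4 / real K" using K1 by (simp add: power2_eq_square field_simps)
    also have "\<dots> \<le> 4 / sqrt Nc" using NcK Nc1 K1 by (intro divide_left_mono mult_pos_pos) auto
    finally show ?thesis .
  qed
  have lhs: "(\<integral>\<omega>. 1 / (real K - real C) * (\<Sum>k\<in>{C..<K}. l1norm d (g (X k \<omega>))) \<partial>PM)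
      = (\<Sum>k\<in>{C..<K}. E k) / (real K - real C)"
  proof -
    have "(\<integral>\<omega>. (\<Sum>k\<in>{C..<K}. l1norm d (g (X k \<omega>))) \<partial>PM) = (\<Sum>k\<in>{C..<K}. E k)"
      unfolding E_def by (rule Bochner_Integration.integral_sum) (rule simple_int)
    then show ?thesis by simp
  qed
  have "((\<Sum>k\<in>{C..<K}. E k) / (real K - real C))\<^sup>2 \<le> (sqrt (real K) * (c3 * Br) / (real K - real C))\<^sup>2"
  proof -
    have s0: "0 \<le> (\<Sum>k\<in>{C..<K}. E k)" using E0 by (intro sum_nonneg) auto
    have kc: "0 < real K - real C" using KC by simp
    show ?thesis using bound s0 kc by (intro power_mono divide_right_mono divide_nonneg_pos) auto
  qed
  also have "\<dots> = real K / (real K - real C)\<^sup>2 * (c3\<^sup>2 * Br\<^sup>2)"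
    by (simp add: power_divide power_mult_distrib)
  also have "\<dots> \<le> 4 / sqrt Nc * (c3\<^sup>2 * Br\<^sup>2)"
    using KC2 by (intro mult_right_mono) auto
  finally show ?thesis unfolding lhs
    by (simp add: c3_def Nc_def Br_def V_def F_def Lsum_def S_def power_mult_distrib mult_ac)
qed

end

theorem theorem3:
  fixes \<beta> :: real
  assumes "0 < \<beta>" and "\<beta> < 1"
  shows "\<exists>A>0. \<exists>K0::nat.
   \<forall>(d::nat) (f::(nat \<Rightarrow> real) \<Rightarrow> real) (g::(nat \<Rightarrow> real) \<Rightarrow> (nat \<Rightarrow> real))
    (L::nat \<Rightarrow> real) (\<sigma>::nat \<Rightarrow> real) (fstar::real) (N::real measure)
    (G::(nat \<Rightarrow> real) \<Rightarrow> real \<Rightarrow> (nat \<Rightarrow> real)) (\<delta>::real) (x0::nat \<Rightarrow> real) (K::nat).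
     (\<forall>x\<in>supp_vec d. fstar \<le> f x) \<and>
     (\<forall>i<d. 0 \<le> L i) \<and>
     (\<forall>x\<in>supp_vec d. \<forall>y\<in>supp_vec d.
        \<bar>f y - f x - (\<Sum>i<d. g x i * (y i - x i))\<bar> \<le> 1 / 2 * (\<Sum>i<d. L i * (y i - x i)\<^sup>2)) \<and>
     C2_with_grad d f g \<and>
     prob_space N \<and>
     (\<forall>i<d. (\<lambda>p. G (fst p) (snd p) i) \<in> borel_measurable (borel \<Otimes>\<^sub>M N)) \<and>
     (\<forall>x\<in>supp_vec d. \<forall>i<d. integrable N (\<lambda>u. G x u i) \<and> (\<integral>u. G x u i \<partial>N) = g x i) \<and>
     (\<forall>i<d. 0 \<le> \<sigma> i) \<and>
     (\<forall>x\<in>supp_vec d. \<forall>i<d. integrable N (\<lambda>u. (G x u i - g x i)\<^sup>2) \<and>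
        (\<integral>u. (G x u i - g x i)\<^sup>2 \<partial>N) \<le> (\<sigma> i)\<^sup>2) \<and>
     0 < \<delta> \<and> x0 \<in> supp_vec d \<and> K0 \<le> K
     \<longrightarrow>
     (let M = Pi\<^sub>M UNIV (\<lambda>_::nat \<times> nat. N);
          C = signum_C \<beta>;
          xk = signum_x d \<beta> \<delta> G x0;
          Ncalls = real (\<Sum>k<K. k + 1);
          fC = (\<integral>\<omega>. f (xk C \<omega>) \<partial>M)
      in (\<integral>\<omega>. 1 / (real K - real C) * (\<Sum>k\<in>{C..<K}. l1norm d (g (xk k \<omega>))) \<partial>M)\<^sup>2
         \<le> A / sqrt Ncalls *
            ((fC - fstar) / \<delta> + (1 + ln Ncalls) *
               (\<delta> * (\<Sum>i<d. L i) / (1 - \<beta>) + (\<Sum>i<d. \<sigma> i) * sqrt (1 - \<beta>)))\<^sup>2)"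
proof -
  obtain B where Bd: "\<forall>k. (\<Sum>t\<le>k. \<beta>^t * (real t + 1)\<^sup>2) \<le> B"
    using poly_geom_bound[OF assms] by blast
  define c3 where "c3 = max 1 (max ((6 * B + 1/2) * (1 - \<beta>)) (2 * B / sqrt (1 - \<beta>)))"
  have c3: "c3 \<ge> 1" by (simp add: c3_def)
  show ?thesis
  proof (intro exI[of _ "4 * c3\<^sup>2"] conjI exI[of _ "2 * signum_C \<beta> + 1"] allI impI)
    show "0 < 4 * c3\<^sup>2" using c3 by simp
  next
    fix d :: nat and f :: "(nat \<Rightarrow> real) \<Rightarrow> real" and g :: "(nat \<Rightarrow> real) \<Rightarrow> (nat \<Rightarrow> real)"
      and L :: "nat \<Rightarrow> real" and \<sigma> :: "nat \<Rightarrow> real" and fstar :: real and N :: "real measure"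
      and G :: "(nat \<Rightarrow> real) \<Rightarrow> real \<Rightarrow> (nat \<Rightarrow> real)" and \<delta> :: real and x0 :: "nat \<Rightarrow> real" and K :: nat
    assume H: "(\<forall>x\<in>supp_vec d. fstar \<le> f x) \<and>
     (\<forall>i<d. 0 \<le> L i) \<and>
     (\<forall>x\<in>supp_vec d. \<forall>y\<in>supp_vec d.
        \<bar>f y - f x - (\<Sum>i<d. g x i * (y i - x i))\<bar> \<le> 1 / 2 * (\<Sum>i<d. L i * (y i - x i)\<^sup>2)) \<and>
     C2_with_grad d f g \<and>
     prob_space N \<and>
     (\<forall>i<d. (\<lambda>p. G (fst p) (snd p) i) \<in> borel_measurable (borel \<Otimes>\<^sub>M N)) \<and>
     (\<forall>x\<in>supp_vec d. \<forall>i<d. integrable N (\<lambda>u. G x u i) \<and> (\<integral>u. G x u i \<partial>N) = g x i) \<and>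
     (\<forall>i<d. 0 \<le> \<sigma> i) \<and>
     (\<forall>x\<in>supp_vec d. \<forall>i<d. integrable N (\<lambda>u. (G x u i - g x i)\<^sup>2) \<and>
        (\<integral>u. (G x u i - g x i)\<^sup>2 \<partial>N) \<le> (\<sigma> i)\<^sup>2) \<and>
     0 < \<delta> \<and> x0 \<in> supp_vec d \<and> 2 * signum_C \<beta> + 1 \<le> K"
    interpret S: sig d f g L \<sigma> fstar N G \<delta> x0 \<beta> "signum_C \<beta>"
      using H assms unfolding sig_def by (elim conjE) (intro conjI; assumption)
    have XX: "signum_x d \<beta> \<delta> G x0 = S.X" by (simp add: fun_eq_iff S.X_def signum_x_def)
    have KK: "2 * signum_C \<beta> + 1 \<le> K" using H by blast
    show "let M = Pi\<^sub>M UNIV (\<lambda>_::nat \<times> nat. N);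
          C = signum_C \<beta>;
          xk = signum_x d \<beta> \<delta> G x0;
          Ncalls = real (\<Sum>k<K. k + 1);
          fC = (\<integral>\<omega>. f (xk C \<omega>) \<partial>M)
      in (\<integral>\<omega>. 1 / (real K - real C) * (\<Sum>k\<in>{C..<K}. l1norm d (g (xk k \<omega>))) \<partial>M)\<^sup>2
         \<le> 4 * c3\<^sup>2 / sqrt Ncalls *
            ((fC - fstar) / \<delta> + (1 + ln Ncalls) *
               (\<delta> * (\<Sum>i<d. L i) / (1 - \<beta>) + (\<Sum>i<d. \<sigma> i) * sqrt (1 - \<beta>)))\<^sup>2"
      unfolding Let_def XX S.PM_def[symmetric] c3_def
      by (rule S.main_bound[OF Bd KK])
  qed
qed

end
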